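(* Let $\alpha\in(0,1)\cup(1,2)$ and let $\rho_{AB}$ be a state on a finite-dimensional $\mathcal{H}_A\otimes\mathcal{H}_B$. Then $$E^F_{(2-\alpha)/\alpha}(A;B)_\rho\geq E^{\mathrm{sq}}_\alpha(A;B)_\rho.$$
   Context: All Hilbert spaces are finite-dimensional and $\log$ is the natural logarithm. For a positive semi-definite $M$ and function $f$, $f(M)$ applies $f$ only to nonzero eigenvalues (negative powers are generalized inverses). For a state $\rho_{ABE}$ and $\alpha\in(0,1)\cup(1,\infty)$, $$I_\alpha(A;B|E)_\rho=\frac{\alpha}{\alpha-1}\log\mathrm{Tr}\Big\{\Big(\rho_E^{(\alpha-1)/2}\,\mathrm{Tr}_A\big\{\rho_{AE}^{(1-\alpha)/2}\rho_{ABE}^{\alpha}\rho_{AE}^{(1-\alpha)/2}\big\}\,\rho_E^{(\alpha-1)/2}\Big)^{1/\alpha}\Big\},$$ and the Rényi squashed entanglement is $E^{\mathrm{sq}}_\alpha(A;B)_\rho=\frac12\inf\{I_\alpha(A;B|E)_\omega:\ \mathrm{Tr}_E\omega_{ABE}=\rho_{AB}\}$ over all extensions on finite-dimensional $\mathcal{H}_E$. For $\beta\in(0,1)\cup(1,\infty)$ the Rényi conditional entropy is $H_\beta(A|B)_\rho=\frac{\beta}{1-\beta}\log\mathrm{Tr}\{(\mathrm{Tr}_A\{\rho_{AB}^\beta\})^{1/\beta}\}$, and the Rényi entanglement of formation is $E^F_\beta(A;B)_\rho=\inf\{H_\beta(A|X)_\sigma:\ \rho_{AB}=\sum_x p_X(x)|\psi^x\rangle\langle\psi^x|_{AB}\}$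 over finite pure-state ensembles, with $\sigma_{XAB}=\sum_x p_X(x)|x\rangle\langle x|_X\otimes|\psi^x\rangle\langle\psi^x|_{AB}$, $\{|x\rangle\}$ orthonormal. *)

theory Defs
  imports "Jordan_Normal_Form.Matrix" "HOL-Library.Extended_Real"
begin

(* A composite system X1 (x) X2 (x) X3 of dimensions d1,d2,d3 is C^(d1*d2*d3) with
   index i = (x1*d2 + x2)*d3 + x3  (standard Kronecker ordering). *)

definition mtrace :: "complex mat \<Rightarrow> complex" where
  "mtrace M = (\<Sum>i<dim_row M. M $$ (i,i))"

definition adj :: "complex mat \<Rightarrow> complex mat" where
  "adj M = mat (dim_col M) (dim_row M) (\<lambda>(i,j). cnj (M $$ (j,i)))"

definition unitary :: "nat \<Rightarrow> complex mat \<Rightarrow> bool" where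
  "unitary n U \<longleftrightarrow> U \<in> carrier_mat n n \<and> adj U * U = 1\<^sub>m n"

definition psd :: "nat \<Rightarrow> complex mat \<Rightarrow> bool" where
  "psd n M \<longleftrightarrow> M \<in> carrier_mat n n \<and> adj M = M \<and>
     (\<forall>v \<in> carrier_vec n. 0 \<le> Re (\<Sum>i<n. cnj (v $ i) * (M *\<^sub>v v) $ i))"

definition density :: "nat \<Rightarrow> complex mat \<Rightarrow> bool" where
  "density n M \<longleftrightarrow> psd n M \<and> mtrace M = 1"

definition mat_fun :: "nat \<Rightarrow> (real \<Rightarrow> real) \<Rightarrow> complex mat \<Rightarrow> complex mat" where
  "mat_fun n f M =
     (let (U, d) = (SOME (U, d). unitary n U \<and>
            M = U * mat n n (\<lambda>(i,j). if i = j then complex_of_real (d i) else 0) * adj U)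
      in U * mat n n (\<lambda>(i,j). if i = j \<and> d i \<noteq> 0 then complex_of_real (f (d i)) else 0) * adj U)"

(* M^a on the support of M (negative a gives the generalized inverse power) *)
definition mat_pow :: "nat \<Rightarrow> complex mat \<Rightarrow> real \<Rightarrow> complex mat" where
  "mat_pow n M a = mat_fun n (\<lambda>x. x powr a) M"

(* partial trace over the middle factor of X1 (x) X2 (x) X3 *)
definition ptrace_mid :: "nat \<Rightarrow> nat \<Rightarrow> nat \<Rightarrow> complex mat \<Rightarrow> complex mat" where
  "ptrace_mid d1 d2 d3 M = mat (d1*d3) (d1*d3) (\<lambda>(i,j).
      \<Sum>k<d2. M $$ (((i div d3)*d2 + k)*d3 + i mod d3, ((j div d3)*d2 + k)*d3 + j mod d3))"

(* X \<mapsto> X1-part (x) I_{X2} (x) X3-part: embeds an operator on X1 (x) X3 into X1 (x) X2 (x) X3 *)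
definition id_mid :: "nat \<Rightarrow> nat \<Rightarrow> nat \<Rightarrow> complex mat \<Rightarrow> complex mat" where
  "id_mid d1 d2 d3 X = mat (d1*d2*d3) (d1*d2*d3) (\<lambda>(i,j).
      if (i div d3) mod d2 = (j div d3) mod d2
      then X $$ ((i div (d2*d3))*d3 + i mod d3, (j div (d2*d3))*d3 + j mod d3) else 0)"

definition swap_sys :: "nat \<Rightarrow> nat \<Rightarrow> complex mat \<Rightarrow> complex mat" where
  "swap_sys d1 d2 M = mat (d2*d1) (d2*d1) (\<lambda>(i,j).
      M $$ ((i mod d1)*d2 + i div d1, (j mod d1)*d2 + j div d1))"

definition renyi_cmi :: "real \<Rightarrow> nat \<Rightarrow> nat \<Rightarrow> nat \<Rightarrow> complex mat \<Rightarrow> real" where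
  "renyi_cmi \<alpha> dA dB dE \<rho> =
    (let \<rho>AE = ptrace_mid dA dB dE \<rho>;
         \<rho>E = ptrace_mid 1 (dA*dB) dE \<rho>;
         S = mat_pow (dA*dE) \<rho>AE ((1-\<alpha>)/2);
         T = ptrace_mid 1 dA (dB*dE)
               (id_mid dA dB dE S * mat_pow (dA*dB*dE) \<rho> \<alpha> * id_mid dA dB dE S);
         R = id_mid 1 dB dE (mat_pow dE \<rho>E ((\<alpha>-1)/2));
         Q = R * T * R
     in \<alpha>/(\<alpha>-1) * ln (Re (mtrace (mat_pow (dB*dE) Q (1/\<alpha>)))))"

definition renyi_sq :: "real \<Rightarrow> nat \<Rightarrow> nat \<Rightarrow> complex mat \<Rightarrow> ereal" where
  "renyi_sq \<alpha> dA dB \<rho> = ereal (1/2) * Inf {ereal (renyi_cmi \<alpha> dA dB dE \<omega>) | dE \<omega>.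
      0 < dE \<and> density (dA*dB*dE) \<omega> \<and> ptrace_mid (dA*dB) dE 1 \<omega> = \<rho>}"

definition renyi_cond_ent :: "real \<Rightarrow> nat \<Rightarrow> nat \<Rightarrow> complex mat \<Rightarrow> real" where
  "renyi_cond_ent \<beta> dA dB \<rho> =
     \<beta>/(1-\<beta>) * ln (Re (mtrace (mat_pow dB (ptrace_mid 1 dA dB (mat_pow (dA*dB) \<rho> \<beta>)) (1/\<beta>))))"

(* classical-quantum state sigma_XAB = sum_{x<n} p(x) |x><x|_X (x) |psi^x><psi^x|_AB,
   written entrywise; X has dimension n, AB has dimension D *)
definition cq_state :: "nat \<Rightarrow> nat \<Rightarrow> (nat \<Rightarrow> real) \<Rightarrow> (nat \<Rightarrow> complex vec) \<Rightarrow> complex mat" where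
  "cq_state n D p \<psi> = mat (n*D) (n*D) (\<lambda>(i,j).
      if i div D = j div D
      then complex_of_real (p (i div D)) * (\<psi> (i div D) $ (i mod D)) * cnj (\<psi> (j div D) $ (j mod D))
      else 0)"

definition ens_avg :: "nat \<Rightarrow> nat \<Rightarrow> (nat \<Rightarrow> real) \<Rightarrow> (nat \<Rightarrow> complex vec) \<Rightarrow> complex mat" where
  "ens_avg n D p \<psi> = mat D D (\<lambda>(i,j).
      \<Sum>x<n. complex_of_real (p x) * (\<psi> x $ i) * cnj (\<psi> x $ j))"

definition renyi_eof :: "real \<Rightarrow> nat \<Rightarrow> nat \<Rightarrow> complex mat \<Rightarrow> ereal" where
  "renyi_eof \<beta> dA dB \<rho> = Inf {ereal (renyi_cond_ent \<beta> dA n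
        (swap_sys n dA (ptrace_mid (n*dA) dB 1 (cq_state n (dA*dB) p \<psi>)))) | n p \<psi>.
      0 < n \<and> (\<forall>x<n. 0 \<le> p x) \<and> (\<Sum>x<n. p x) = 1 \<and>
      (\<forall>x<n. \<psi> x \<in> carrier_vec (dA*dB) \<and> (\<Sum>i<dA*dB. cmod (\<psi> x $ i) ^ 2) = 1) \<and>
      \<rho> = ens_avg n (dA*dB) p \<psi>}"

end

theory Submission
  imports Defs "Jordan_Normal_Form.Schur_Decomposition" "HOL-Analysis.Convex"
begin



definition ftil :: "(real \<Rightarrow> real) \<Rightarrow> real \<Rightarrow> real" where
  "ftil f x = (if x = 0 then 0 else f x)"

definition dg :: "nat \<Rightarrow> (nat \<Rightarrow> real) \<Rightarrow> complex mat" where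
  "dg n d = mat n n (\<lambda>(i,j). if i = j then complex_of_real (d i) else 0)"

lemma adj_dims[simp]: "dim_row (adj A) = dim_col A" "dim_col (adj A) = dim_row A"
  by (auto simp: adj_def)

lemma adj_carrier[simp]: "A \<in> carrier_mat n m \<Longrightarrow> adj A \<in> carrier_mat m n"
  by (auto simp: adj_def)

lemma adj_index[simp]: "i < dim_col A \<Longrightarrow> j < dim_row A \<Longrightarrow> adj A $$ (i,j) = cnj (A $$ (j,i))"
  by (auto simp: adj_def)

lemma adj_adj[simp]: "adj (adj A) = A"
  by (rule eq_matI, auto)

lemma adj_mult: assumes "A \<in> carrier_mat n m" "B \<in> carrier_mat m k"
  shows "adj (A * B) = adj B * adj A"
  using assms by (intro eq_matI) (auto simp: scalar_prod_def mult.commute)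

lemma dg_carrier[simp]: "dg n d \<in> carrier_mat n n" by (simp add: dg_def)
lemma dg_dims[simp]: "dim_row (dg n d) = n" "dim_col (dg n d) = n" by (auto simp: dg_def)
lemma dg_index[simp]: "i < n \<Longrightarrow> j < n \<Longrightarrow> dg n d $$ (i,j) = (if i = j then complex_of_real (d i) else 0)"
  by (simp add: dg_def)

lemma adj_dg[simp]: "adj (dg n d) = dg n d"
  by (rule eq_matI, auto)

lemma adj_one[simp]: "adj (1\<^sub>m n) = 1\<^sub>m n"
  by (rule eq_matI, auto)

lemma unitary_right: assumes "unitary n U" shows "U * adj U = 1\<^sub>m n"
  using assms mat_mult_left_right_inverse[of "adj U" n U] unfolding unitary_def by auto

lemma unitary_mult: assumes "unitary n U" "unitary n V" shows "unitary n (U * V)"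
proof -
  have U: "U \<in> carrier_mat n n" and V: "V \<in> carrier_mat n n" using assms unfolding unitary_def by auto
  have "adj (U * V) * (U * V) = adj V * (adj U * (U * V))"
    using U V by (simp add: adj_mult assoc_mult_mat[of _ n n _ n _ n])
  also have "\<dots> = adj V * (adj U * U * V)"
    using U V by (metis adj_carrier assoc_mult_mat mult_carrier_mat)
  also have "\<dots> = adj V * (adj U * U) * V"
    using U V by (metis adj_carrier assoc_mult_mat mult_carrier_mat)
  also have "\<dots> = 1\<^sub>m n" using assms V unfolding unitary_def by simp
  finally show ?thesis using U V unfolding unitary_def by auto
qed

lemma triple_index:
  assumes "X \<in> carrier_mat n n" "Y \<in> carrier_mat n n" "i < n" "j < n"
  shows "(X * dg n d * adj Y) $$ (i,j) = (\<Sum>k<n. X $$ (i,k) * complex_of_real (d k) * cnj (Y $$ (j,k)))"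
proof -
  have "(X * dg n d * adj Y) $$ (i,j) = (\<Sum>l<n. (\<Sum>k<n. X $$ (i,k) * dg n d $$ (k,l)) * cnj (Y $$ (j,l)))"
    using assms by (simp add: scalar_prod_def lessThan_atLeast0)
  also have "\<dots> = (\<Sum>l<n. X $$ (i,l) * complex_of_real (d l) * cnj (Y $$ (j,l)))"
  proof (rule sum.cong[OF refl])
    fix l assume l: "l \<in> {..<n}"
    have "(\<Sum>k<n. X $$ (i,k) * dg n d $$ (k,l)) = (\<Sum>k<n. if k = l then X $$ (i,k) * complex_of_real (d k) else 0)"
      using l by (intro sum.cong) auto
    also have "\<dots> = X $$ (i,l) * complex_of_real (d l)" using l by (simp add: sum.delta')
    finally show "(\<Sum>k<n. X $$ (i,k) * dg n d $$ (k,l)) * cnj (Y $$ (j,l)) = X $$ (i,l) * complex_of_real (d l) * cnj (Y $$ (j,l))" by simp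
  qed
  finally show ?thesis .
qed

lemma massoc: "A \<in> carrier_mat n n \<Longrightarrow> B \<in> carrier_mat n n \<Longrightarrow> C \<in> carrier_mat n n \<Longrightarrow> A * B * C = A * (B * C)"
  by (rule assoc_mult_mat)
lemma mclose: "A \<in> carrier_mat n n \<Longrightarrow> B \<in> carrier_mat n n \<Longrightarrow> A * B \<in> carrier_mat n n"
  by (rule mult_carrier_mat)

lemma cscalar_self: assumes "w \<in> carrier_vec n"
  shows "w \<bullet>c w = complex_of_real (\<Sum>k<n. (cmod (w $ k))^2)"
  using assms by (auto simp: scalar_prod_def lessThan_atLeast0 of_real_sum complex_norm_square
    simp del: of_real_power intro!: sum.cong)

lemma unitary_def2: "unitary n U \<longleftrightarrow> U \<in> carrier_mat n n \<and> adj U * U = 1\<^sub>m n" by (simp add: unitary_def)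

lemma spectral:
  fixes A :: "complex mat"
  assumes "A \<in> carrier_mat n n" "adj A = A"
  shows "\<exists>U d. unitary n U \<and> A = U * dg n d * adj U"
  using assms
proof (induction n arbitrary: A)
  case 0
  show ?case
    apply (rule exI[of _ "1\<^sub>m 0"], rule exI[of _ "\<lambda>_. 0"])
    using 0 by (auto simp: unitary_def intro!: eq_matI)
next
  case (Suc m A)
  define n where "n = Suc m"
  have A: "A \<in> carrier_mat n n" and hA: "adj A = A" using Suc.prems n_def by auto
  have "degree (char_poly A) = n" using degree_monic_char_poly[OF A] by simp
  hence "\<not> constant (poly (char_poly A))" using constant_degree[of "char_poly A"] n_def by simp
  then obtain e where "poly (char_poly A) e = 0" using fundamental_theorem_of_algebra by blast
  hence ev: "eigenvalue A e" using eigenvalue_root_char_poly[OF A] by simp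
  define v where "v = find_eigenvector A e"
  have "eigenvector A v e" using find_eigenvector[OF A ev] v_def by simp
  hence v: "v \<in> carrier_vec n" and v0: "v \<noteq> 0\<^sub>v n" and Av: "A *\<^sub>v v = e \<cdot>\<^sub>v v"
    using A unfolding eigenvector_def by auto
  interpret cof_vec_space n "TYPE(complex)" .
  note bc = basis_completion[OF v v0]
  define ws where "ws = gram_schmidt n (basis_completion v)"
  from gram_schmidt_result[OF bc(2) bc(4) bc(5) ws_def]
  have ws: "set ws \<subseteq> carrier_vec n" "corthogonal ws" "length ws = n" using bc(6) by auto
  obtain vs where bv: "basis_completion v = v # vs" using bc(6,7) n_def by (cases "basis_completion v") auto
  have hdws: "hd ws = v" using gram_schmidt_hd[OF v, of vs] bv ws_def by simp
  have ws0: "ws ! 0 = v" using hdws ws(3) n_def by (cases ws) auto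
  have wsc: "ws ! j \<in> carrier_vec n" if "j < n" for j using ws that by auto
  define c where "c j = sqrt (\<Sum>k<n. (cmod (ws ! j $ k))^2)" for j
  have wsn: "ws ! j \<bullet>c ws ! j = complex_of_real ((c j)^2)" if "j < n" for j
    using cscalar_self[OF wsc[OF that]] c_def by (simp add: sum_nonneg)
  have wso: "ws ! i \<bullet>c ws ! j = 0" if "i < n" "j < n" "i \<noteq> j" for i j
    using corthogonalD[OF ws(2)] ws(3) that by auto
  have cpos: "c j \<noteq> 0" if "j < n" for j
    using corthogonalD[OF ws(2), of j j] ws(3) that wsn[OF that] by auto
  define N where "N = mat n n (\<lambda>(i,j). ws ! j $ i / complex_of_real (c j))"
  have N: "N \<in> carrier_mat n n" by (simp add: N_def)
  have NN: "adj N * N = 1\<^sub>m n"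
  proof (rule eq_matI)
    fix i j assume ij: "i < dim_row (1\<^sub>m n)" "j < dim_col (1\<^sub>m n)"
    have "(adj N * N) $$ (i,j) = (\<Sum>k<n. cnj (ws ! i $ k / complex_of_real (c i)) * (ws ! j $ k / complex_of_real (c j)))"
      using ij by (simp add: N_def scalar_prod_def lessThan_atLeast0)
    also have "\<dots> = (\<Sum>k<n. ws ! j $ k * cnj (ws ! i $ k)) / (complex_of_real (c i) * complex_of_real (c j))"
      by (simp add: sum_divide_distrib mult.commute)
    also have "(\<Sum>k<n. ws ! j $ k * cnj (ws ! i $ k)) = ws ! j \<bullet>c ws ! i"
      using ij wsc[of i] by (simp add: scalar_prod_def lessThan_atLeast0)
    also have "\<dots> / (complex_of_real (c i) * complex_of_real (c j)) = 1\<^sub>m n $$ (i,j)"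
      using ij wso wsn cpos by (cases "i = j") (auto simp: power2_eq_square)
    finally show "(adj N * N) $$ (i,j) = 1\<^sub>m n $$ (i,j)" .
  qed (auto simp: N_def)
  have uN: "unitary n N" using N NN unfolding unitary_def by auto
  have NNr: "N * adj N = 1\<^sub>m n" using unitary_right[OF uN] .
  have colN0: "col N 0 = (1 / complex_of_real (c 0)) \<cdot>\<^sub>v v"
    using ws0 v n_def by (intro eq_vecI) (auto simp: N_def)
  have ANcol: "A *\<^sub>v col N 0 = e \<cdot>\<^sub>v col N 0"
    unfolding colN0 using A v Av by (simp add: mult_mat_vec smult_smult_assoc mult.commute)
  have AN0: "(A * N) $$ (k,0) = e * N $$ (k,0)" if "k < n" for k
  proof -
    have "(A * N) $$ (k,0) = (A *\<^sub>v col N 0) $ k" using that A N n_def by simp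
    also have "\<dots> = e * N $$ (k,0)" unfolding ANcol using that N n_def by simp
    finally show ?thesis .
  qed
  define A' where "A' = adj N * A * N"
  have A'c: "A' \<in> carrier_mat n n" using A N unfolding A'_def by (meson adj_carrier mult_carrier_mat)
  have A'eq: "A' = adj N * (A * N)" unfolding A'_def using A N by (metis adj_carrier assoc_mult_mat)
  have A'0: "A' $$ (i,0) = (if i = 0 then e else 0)" if "i < n" for i
  proof -
    have "A' $$ (i,0) = (\<Sum>k<n. adj N $$ (i,k) * (A * N) $$ (k,0))"
      unfolding A'eq using that A N n_def by (simp add: scalar_prod_def lessThan_atLeast0)
    also have "\<dots> = e * (\<Sum>k<n. adj N $$ (i,k) * N $$ (k,0))"
      by (simp add: AN0 sum_distrib_left mult.assoc mult.left_commute)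
    also have "(\<Sum>k<n. adj N $$ (i,k) * N $$ (k,0)) = (adj N * N) $$ (i,0)"
      using that N n_def by (simp add: scalar_prod_def lessThan_atLeast0)
    also have "\<dots> = (if i = 0 then 1 else 0)" unfolding NN using that n_def by simp
    finally show ?thesis by simp
  qed
  have hA': "adj A' = A'"
  proof -
    have "adj A' = adj (A * N) * adj (adj N)" unfolding A'eq
      using A N by (intro adj_mult[of _ n n _ n]) auto
    also have "\<dots> = adj N * A * N" using A N hA adj_mult[of A n n N n] by simp
    finally show ?thesis unfolding A'_def .
  qed
  have A'0r: "A' $$ (0,j) = cnj (A' $$ (j,0))" if "j < n" for j
  proof -
    have "A' $$ (0,j) = adj A' $$ (0,j)" using hA' by simp
    also have "\<dots> = cnj (A' $$ (j,0))" using that A'c n_def by simp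
    finally show ?thesis .
  qed
  have ereal: "e = complex_of_real (Re e)"
  proof -
    have "e = cnj e" using A'0r[of 0] A'0[of 0] n_def by simp
    thus ?thesis by (auto simp: complex_eq_iff)
  qed
  define A3 where "A3 = mat m m (\<lambda>(i,j). A' $$ (Suc i, Suc j))"
  have A3c: "A3 \<in> carrier_mat m m" by (simp add: A3_def)
  have hA3: "adj A3 = A3"
  proof (rule eq_matI)
    fix i j assume ij: "i < dim_row A3" "j < dim_col A3"
    have "adj A3 $$ (i,j) = cnj (A' $$ (Suc j, Suc i))" using ij by (simp add: A3_def)
    also have "\<dots> = adj A' $$ (Suc i, Suc j)" using ij A'c n_def by (simp add: A3_def)
    finally show "adj A3 $$ (i,j) = A3 $$ (i,j)" using hA' ij by (simp add: A3_def)
  qed (auto simp: A3_def)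
  obtain U3 d3 where uU3: "unitary m U3" and A3eq: "A3 = U3 * dg m d3 * adj U3"
    using Suc.IH[OF A3c hA3] by blast
  have U3: "U3 \<in> carrier_mat m m" using uU3 unfolding unitary_def by auto
  define F where "F = mat n n (\<lambda>(i,j). if i = 0 then (if j = 0 then 1 else 0) else if j = 0 then 0 else U3 $$ (i-1, j-1))"
  have F: "F \<in> carrier_mat n n" by (simp add: F_def)
  have FF: "adj F * F = 1\<^sub>m n"
  proof (rule eq_matI)
    fix i j assume ij: "i < dim_row (1\<^sub>m n)" "j < dim_col (1\<^sub>m n)"
    have "(adj F * F) $$ (i,j) = (\<Sum>k<Suc m. cnj (F $$ (k,i)) * F $$ (k,j))"
      using ij F n_def by (simp add: scalar_prod_def lessThan_atLeast0)
    also have "\<dots> = cnj (F $$ (0,i)) * F $$ (0,j) + (\<Sum>k<m. cnj (F $$ (Suc k,i)) * F $$ (Suc k,j))"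
      by (simp only: sum.lessThan_Suc_shift)
    also have "\<dots> = 1\<^sub>m n $$ (i,j)"
    proof (cases i)
      case 0
      thus ?thesis using ij n_def by (simp add: F_def)
    next
      case (Suc i')
      note i = this
      show ?thesis
      proof (cases j)
        case 0 thus ?thesis using ij n_def i by (simp add: F_def)
      next
        case (Suc j')
        have "(\<Sum>k<m. cnj (F $$ (Suc k,i)) * F $$ (Suc k,j)) = (\<Sum>k<m. cnj (U3 $$ (k,i')) * U3 $$ (k,j'))"
          using ij n_def i Suc by (intro sum.cong) (auto simp: F_def)
        also have "\<dots> = (adj U3 * U3) $$ (i', j')" using ij n_def i Suc U3 by (simp add: scalar_prod_def lessThan_atLeast0)
        also have "\<dots> = 1\<^sub>m m $$ (i', j')" using uU3 unfolding unitary_def by simp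
        finally show ?thesis using ij n_def i Suc by (simp add: F_def)
      qed
    qed
    finally show "(adj F * F) $$ (i,j) = 1\<^sub>m n $$ (i,j)" .
  qed (auto simp: F_def)
  have uF: "unitary n F" using F FF unfolding unitary_def by auto
  define d where "d i = (if i = 0 then Re e else d3 (i - 1))" for i
  have A'F: "A' = F * dg n d * adj F"
  proof (rule eq_matI)
    fix i j assume ij: "i < dim_row (F * dg n d * adj F)" "j < dim_col (F * dg n d * adj F)"
    hence i: "i < n" and j: "j < n" using F by auto
    have "(F * dg n d * adj F) $$ (i,j) = (\<Sum>k<Suc m. F $$ (i,k) * complex_of_real (d k) * cnj (F $$ (j,k)))"
      using triple_index[OF F F i j] n_def by simp
    also have "\<dots> = F $$ (i,0) * complex_of_real (d 0) * cnj (F $$ (j,0)) + (\<Sum>k<m. F $$ (i,Suc k) * complex_of_real (d (Suc k)) * cnj (F $$ (j,Suc k)))"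
      by (simp only: sum.lessThan_Suc_shift)
    also have "\<dots> = A' $$ (i,j)"
    proof (cases i)
      case 0
      have "A' $$ (i,j) = cnj (if j = 0 then e else 0)" using A'0r[OF j] A'0[OF j] 0 by simp
      thus ?thesis using 0 j n_def ereal by (simp add: F_def d_def) (metis complex_cnj_complex_of_real)
    next
      case (Suc i')
      note ii = this
      show ?thesis
      proof (cases j)
        case 0 thus ?thesis using i j n_def ii A'0[OF i] by (simp add: F_def)
      next
        case (Suc j')
        have "(\<Sum>k<m. F $$ (i,Suc k) * complex_of_real (d (Suc k)) * cnj (F $$ (j,Suc k))) = (\<Sum>k<m. U3 $$ (i',k) * complex_of_real (d3 k) * cnj (U3 $$ (j',k)))"
          using i j n_def ii Suc by (intro sum.cong) (auto simp: F_def d_def)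
        also have "\<dots> = A3 $$ (i', j')" unfolding A3eq using triple_index[OF U3 U3] i j ii Suc n_def by simp
        also have "\<dots> = A' $$ (i,j)" using i j ii Suc n_def by (simp add: A3_def)
        finally show ?thesis using ii Suc n_def i j by (simp add: F_def)
      qed
    qed
    finally show "A' $$ (i,j) = (F * dg n d * adj F) $$ (i,j)" by simp
  qed (use F A'c in auto)
  have "A = N * A' * adj N"
  proof -
    have "N * A' * adj N = (N * adj N) * A * (N * adj N)"
      unfolding A'_def using N A by (simp add: massoc[of _ n] mclose[of _ n])
    also have "\<dots> = A" using A NNr by simp
    finally show ?thesis by simp
  qed
  also have "\<dots> = (N * F) * dg n d * adj (N * F)"
    unfolding A'F using N F adj_mult[of N n n F n] by (simp add: massoc[of _ n] mclose[of _ n])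
  finally show ?case using unitary_mult[OF uN uF] n_def by blast
qed




definition herm :: "nat \<Rightarrow> complex mat \<Rightarrow> bool" where
  "herm n M \<longleftrightarrow> M \<in> carrier_mat n n \<and> adj M = M"

definition eigv :: "nat \<Rightarrow> complex mat \<Rightarrow> complex vec \<Rightarrow> real \<Rightarrow> bool" where
  "eigv n M v \<mu> \<longleftrightarrow> v \<in> carrier_vec n \<and> v \<noteq> 0\<^sub>v n \<and> M *\<^sub>v v = complex_of_real \<mu> \<cdot>\<^sub>v v"

lemma mv_index: "A \<in> carrier_mat n m \<Longrightarrow> v \<in> carrier_vec m \<Longrightarrow> i < n \<Longrightarrow>
    (A *\<^sub>v v) $ i = (\<Sum>j<m. A $$ (i,j) * v $ j)"
  by (simp add: scalar_prod_def lessThan_atLeast0)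

lemma dg_mult_vec: "v \<in> carrier_vec n \<Longrightarrow> dg n d *\<^sub>v v = vec n (\<lambda>i. complex_of_real (d i) * v $ i)"
proof (intro eq_vecI)
  fix i assume v: "v \<in> carrier_vec n" and i: "i < dim_vec (vec n (\<lambda>i. complex_of_real (d i) * v $ i))"
  hence i': "i < n" by simp
  have "(dg n d *\<^sub>v v) $ i = (\<Sum>j<n. (if i = j then complex_of_real (d i) else 0) * v $ j)"
    using mv_index[of "dg n d" n n v i] v i' by simp
  also have "\<dots> = (\<Sum>j<n. if i = j then complex_of_real (d i) * v $ j else 0)"
    by (intro sum.cong) auto
  also have "\<dots> = complex_of_real (d i) * v $ i" using i' by (simp add: sum.delta)
  finally show "(dg n d *\<^sub>v v) $ i = vec n (\<lambda>i. complex_of_real (d i) * v $ i) $ i" using i' by simp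
qed auto

lemma mv_unit: fixes A :: "complex mat" assumes "A \<in> carrier_mat n m" "i < m" shows "A *\<^sub>v unit_vec m i = col A i"
proof (intro eq_vecI)
  fix k assume "k < dim_vec (col A i)"
  hence k: "k < n" using assms by simp
  have "(A *\<^sub>v unit_vec m i) $ k = (\<Sum>j<m. A $$ (k,j) * unit_vec m i $ j)"
    using mv_index[OF assms(1) _ k] by simp
  also have "\<dots> = (\<Sum>j<m. if j = i then A $$ (k,j) else 0)"
    using assms(2) by (intro sum.cong) (auto simp: unit_vec_def)
  also have "\<dots> = A $$ (k,i)" using assms by (simp add: sum.delta')
  finally show "(A *\<^sub>v unit_vec m i) $ k = col A i $ k" using assms k by simp
qed (use assms in auto)

lemma inv_mv: "adj V * V = 1\<^sub>m n \<Longrightarrow> V \<in> carrier_mat n n \<Longrightarrow> x \<in> carrier_vec n \<Longrightarrow> adj V *\<^sub>v (V *\<^sub>v x) = x"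
  by (metis adj_carrier assoc_mult_mat_vec one_mult_mat_vec)

lemma triple_mv: "A \<in> carrier_mat n n \<Longrightarrow> B \<in> carrier_mat n n \<Longrightarrow> C \<in> carrier_mat n n \<Longrightarrow>
   v \<in> carrier_vec n \<Longrightarrow> (A * B * C) *\<^sub>v v = A *\<^sub>v (B *\<^sub>v (C *\<^sub>v v))"
  by (metis assoc_mult_mat_vec mult_carrier_mat mult_mat_vec_carrier)

lemma eig_act:
  assumes uV: "unitary n V" and v: "v \<in> carrier_vec n"
    and ev: "(V * dg n e * adj V) *\<^sub>v v = complex_of_real \<mu> \<cdot>\<^sub>v v"
  shows "(V * dg n (\<lambda>i. g (e i)) * adj V) *\<^sub>v v = complex_of_real (g \<mu>) \<cdot>\<^sub>v v"
proof -
  have V: "V \<in> carrier_mat n n" using uV unfolding unitary_def by auto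
  have VV: "adj V * V = 1\<^sub>m n" using uV unfolding unitary_def by auto
  have VVr: "V * adj V = 1\<^sub>m n" using unitary_right[OF uV] .
  define w where "w = adj V *\<^sub>v v"
  have w: "w \<in> carrier_vec n" using V v by (metis adj_carrier mult_mat_vec_carrier w_def)
  have "V *\<^sub>v (dg n e *\<^sub>v w) = complex_of_real \<mu> \<cdot>\<^sub>v v"
    using ev V v triple_mv[of V n "dg n e" "adj V" v] by (simp add: w_def)
  hence "adj V *\<^sub>v (V *\<^sub>v (dg n e *\<^sub>v w)) = adj V *\<^sub>v (complex_of_real \<mu> \<cdot>\<^sub>v v)" by simp
  also have "adj V *\<^sub>v (V *\<^sub>v (dg n e *\<^sub>v w)) = dg n e *\<^sub>v w"
    using inv_mv[OF VV V] V w by (simp add: dg_mult_vec)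
  also have "adj V *\<^sub>v (complex_of_real \<mu> \<cdot>\<^sub>v v) = complex_of_real \<mu> \<cdot>\<^sub>v w"
    using V v by (simp add: mult_mat_vec[of _ n n] w_def)
  finally have dw: "dg n e *\<^sub>v w = complex_of_real \<mu> \<cdot>\<^sub>v w" .
  have comp: "complex_of_real (g (e i)) * w $ i = complex_of_real (g \<mu>) * w $ i" if i: "i < n" for i
  proof -
    have "complex_of_real (e i) * w $ i = complex_of_real \<mu> * w $ i"
      using arg_cong[OF dw, of "\<lambda>x. x $ i"] w i by (simp add: dg_mult_vec)
    hence "e i = \<mu> \<or> w $ i = 0" by auto
    thus ?thesis by auto
  qed
  have dgw: "dg n (\<lambda>i. g (e i)) *\<^sub>v w = complex_of_real (g \<mu>) \<cdot>\<^sub>v w"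
    using w comp by (intro eq_vecI) (auto simp: dg_mult_vec)
  have "(V * dg n (\<lambda>i. g (e i)) * adj V) *\<^sub>v v = V *\<^sub>v (dg n (\<lambda>i. g (e i)) *\<^sub>v w)"
    using V v triple_mv[of V n "dg n (\<lambda>i. g (e i))" "adj V" v] by (simp add: w_def)
  also have "\<dots> = complex_of_real (g \<mu>) \<cdot>\<^sub>v (V *\<^sub>v w)" using dgw V w by (simp add: mult_mat_vec[of _ n n])
  also have "V *\<^sub>v w = v" using V v by (simp flip: assoc_mult_mat_vec[of V n n "adj V" n] add: w_def VVr)
  finally show ?thesis .
qed

lemma unitary_col_nz: assumes "unitary n U" "i < n" shows "col U i \<noteq> 0\<^sub>v n"
proof
  assume c: "col U i = 0\<^sub>v n"
  have U: "U \<in> carrier_mat n n" using assms unfolding unitary_def by auto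
  have "(adj U * U) $$ (i,i) = row (adj U) i \<bullet> col U i" using U assms by simp
  also have "\<dots> = 0" using c U assms by simp
  finally show False using assms unfolding unitary_def by simp
qed

lemma char_decomp:
  assumes uV: "unitary n V" and W: "W \<in> carrier_mat n n"
    and act: "\<And>v \<mu>. eigv n (V * dg n e * adj V) v \<mu> \<Longrightarrow> W *\<^sub>v v = complex_of_real (g \<mu>) \<cdot>\<^sub>v v"
  shows "W = V * dg n (\<lambda>i. g (e i)) * adj V"
proof -
  have V: "V \<in> carrier_mat n n" using uV unfolding unitary_def by auto
  have VV: "adj V * V = 1\<^sub>m n" using uV unfolding unitary_def by auto
  have VVr: "V * adj V = 1\<^sub>m n" using unitary_right[OF uV] .
  have MV: "(V * dg n e * adj V) * V = V * dg n e" using V VV by (simp add: massoc[of _ n] mclose[of _ n])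
  have colev: "eigv n (V * dg n e * adj V) (col V i) (e i)" if i: "i < n" for i
  proof -
    have Mc: "V * dg n e * adj V \<in> carrier_mat n n" using V by (meson adj_carrier dg_carrier mult_carrier_mat)
    have "(V * dg n e * adj V) *\<^sub>v col V i = col ((V * dg n e * adj V) * V) i"
      using V i col_mult2[OF Mc V i] by simp
    also have "\<dots> = col (V * dg n e) i" by (simp add: MV)
    also have "\<dots> = V *\<^sub>v col (dg n e) i" using col_mult2[OF V dg_carrier i] .
    also have "col (dg n e) i = complex_of_real (e i) \<cdot>\<^sub>v unit_vec n i"
      using i by (intro eq_vecI) (auto simp: unit_vec_def)
    also have "V *\<^sub>v (complex_of_real (e i) \<cdot>\<^sub>v unit_vec n i) = complex_of_real (e i) \<cdot>\<^sub>v col V i"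
      using V i by (simp add: mult_mat_vec[of _ n n] mv_unit)
    finally show ?thesis unfolding eigv_def using unitary_col_nz[OF uV i] V i by auto
  qed
  have WV: "W * V = V * dg n (\<lambda>i. g (e i))"
  proof (rule mat_col_eqI)
    fix i assume "i < dim_col (V * dg n (\<lambda>i. g (e i)))"
    hence i: "i < n" using V by simp
    have "col (W * V) i = W *\<^sub>v col V i" using col_mult2[OF W V i] .
    also have "\<dots> = complex_of_real (g (e i)) \<cdot>\<^sub>v col V i" using act[OF colev[OF i]] .
    also have "\<dots> = V *\<^sub>v (complex_of_real (g (e i)) \<cdot>\<^sub>v unit_vec n i)"
      using V i by (simp add: mult_mat_vec[of _ n n] mv_unit)
    also have "complex_of_real (g (e i)) \<cdot>\<^sub>v unit_vec n i = col (dg n (\<lambda>i. g (e i))) i"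
      using i by (intro eq_vecI) (auto simp: unit_vec_def)
    also have "V *\<^sub>v \<dots> = col (V * dg n (\<lambda>i. g (e i))) i" using col_mult2[OF V dg_carrier i] by simp
    finally show "col (W * V) i = col (V * dg n (\<lambda>i. g (e i))) i" .
  qed (use W V in auto)
  have "W = W * (V * adj V)" using W VVr by simp
  also have "\<dots> = (W * V) * adj V" using W V by (simp add: massoc[of _ n])
  finally show ?thesis unfolding WV .
qed

lemma mat_fun_decomp:
  assumes "herm n M"
  shows "\<exists>U d. unitary n U \<and> M = U * dg n d * adj U \<and>
     mat_fun n f M = U * dg n (\<lambda>i. ftil f (d i)) * adj U"
proof -
  let ?P = "\<lambda>(U, d). unitary n U \<and> M = U * mat n n (\<lambda>(i,j). if i = j then complex_of_real (d i) else 0) * adj U"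
  have ex: "\<exists>x. ?P x" using spectral[of M n] assms unfolding herm_def dg_def by auto
  obtain U d where ud: "(SOME x. ?P x) = (U, d)" by (cases "SOME x. ?P x") auto
  have P: "?P (U, d)" using someI_ex[OF ex] ud by simp
  have "mat n n (\<lambda>(i,j). if i = j \<and> d i \<noteq> 0 then complex_of_real (f (d i)) else 0) = dg n (\<lambda>i. ftil f (d i))"
    by (intro eq_matI) (auto simp: dg_def ftil_def)
  hence "mat_fun n f M = U * dg n (\<lambda>i. ftil f (d i)) * adj U"
    unfolding mat_fun_def ud by simp
  thus ?thesis using P unfolding dg_def by auto
qed

lemma dg_fun_carrier: "unitary n U \<Longrightarrow> U * dg n d * adj U \<in> carrier_mat n n"
  unfolding unitary_def by (meson adj_carrier dg_carrier mult_carrier_mat)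

lemma mf_char:
  assumes hM: "herm n M" and W: "W \<in> carrier_mat n n"
    and act: "\<And>v \<mu>. eigv n M v \<mu> \<Longrightarrow> W *\<^sub>v v = complex_of_real (ftil f \<mu>) \<cdot>\<^sub>v v"
  shows "mat_fun n f M = W"
proof -
  obtain U d where uU: "unitary n U" and M: "M = U * dg n d * adj U"
    and mf: "mat_fun n f M = U * dg n (\<lambda>i. ftil f (d i)) * adj U"
    using mat_fun_decomp[OF hM] by blast
  show ?thesis unfolding mf by (rule char_decomp[OF uU W, symmetric]) (use act M in auto)
qed

lemma mf_eig:
  assumes hM: "herm n M" and v: "v \<in> carrier_vec n" and ev: "M *\<^sub>v v = complex_of_real \<mu> \<cdot>\<^sub>v v"
  shows "mat_fun n f M *\<^sub>v v = complex_of_real (ftil f \<mu>) \<cdot>\<^sub>v v"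
proof -
  obtain U d where uU: "unitary n U" and M: "M = U * dg n d * adj U"
    and mf: "mat_fun n f M = U * dg n (\<lambda>i. ftil f (d i)) * adj U"
    using mat_fun_decomp[OF hM] by blast
  show ?thesis unfolding mf by (rule eig_act[OF uU v]) (use ev M in simp)
qed

lemma mf_carrier: "herm n M \<Longrightarrow> mat_fun n f M \<in> carrier_mat n n"
  using mat_fun_decomp[of n M f] dg_fun_carrier by metis

lemma mf_herm: assumes "herm n M" shows "herm n (mat_fun n f M)"
proof -
  obtain U d where uU: "unitary n U" and mf: "mat_fun n f M = U * dg n (\<lambda>i. ftil f (d i)) * adj U"
    using mat_fun_decomp[OF assms] by blast
  have U: "U \<in> carrier_mat n n" using uU unfolding unitary_def by auto
  have "adj (U * dg n (\<lambda>i. ftil f (d i)) * adj U) = U * dg n (\<lambda>i. ftil f (d i)) * adj U"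
    using U by (simp add: adj_mult[of _ n n _ n] mclose[of _ n] massoc[of _ n])
  thus ?thesis unfolding herm_def mf using dg_fun_carrier[OF uU] by simp
qed

lemma psd_herm: "psd n M \<Longrightarrow> herm n M" by (simp add: psd_def herm_def)

lemma cnj_mult_self: "cnj z * z = complex_of_real ((cmod z)^2)"
  by (metis complex_norm_square mult.commute)

lemma psd_eig_nonneg:
  assumes "psd n M" "eigv n M v \<mu>" shows "\<mu> \<ge> 0"
proof -
  have v: "v \<in> carrier_vec n" and v0: "v \<noteq> 0\<^sub>v n" and ev: "M *\<^sub>v v = complex_of_real \<mu> \<cdot>\<^sub>v v"
    using assms(2) unfolding eigv_def by auto
  have "0 \<le> Re (\<Sum>i<n. cnj (v $ i) * (M *\<^sub>v v) $ i)" using assms(1) v unfolding psd_def by auto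
  also have "(\<Sum>i<n. cnj (v $ i) * (M *\<^sub>v v) $ i) = (\<Sum>i<n. complex_of_real (\<mu> * (cmod (v $ i))^2))"
    using ev v by (intro sum.cong) (auto simp: cnj_mult_self)
  finally have "0 \<le> \<mu> * (\<Sum>i<n. (cmod (v $ i))^2)" by (simp add: sum_distrib_left flip: of_real_sum)
  moreover have "(\<Sum>i<n. (cmod (v $ i))^2) > 0"
  proof -
    obtain i where i: "i < n" "v $ i \<noteq> 0" using v v0 by (metis eq_vecI carrier_vecD index_zero_vec(1,2))
    have "(cmod (v $ i))^2 \<le> (\<Sum>i<n. (cmod (v $ i))^2)"
      using i by (intro member_le_sum) auto
    moreover have "(cmod (v $ i))^2 > 0" using i by simp
    ultimately show ?thesis by linarith
  qed
  ultimately show ?thesis by (simp add: zero_le_mult_iff)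
qed




definition cm :: "complex mat \<Rightarrow> complex mat" where
  "cm M = mat (dim_row M) (dim_col M) (\<lambda>ij. cnj (M $$ ij))"
definition cv :: "complex vec \<Rightarrow> complex vec" where
  "cv v = vec (dim_vec v) (\<lambda>i. cnj (v $ i))"

lemma cm_carrier[simp]: "M \<in> carrier_mat n m \<Longrightarrow> cm M \<in> carrier_mat n m" by (simp add: cm_def)
lemma cm_dims[simp]: "dim_row (cm M) = dim_row M" "dim_col (cm M) = dim_col M" by (auto simp: cm_def)
lemma cm_index[simp]: "i < dim_row M \<Longrightarrow> j < dim_col M \<Longrightarrow> cm M $$ (i,j) = cnj (M $$ (i,j))"
  by (simp add: cm_def)
lemma cv_carrier[simp]: "v \<in> carrier_vec n \<Longrightarrow> cv v \<in> carrier_vec n" unfolding cv_def by auto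
lemma cv_dim[simp]: "dim_vec (cv v) = dim_vec v" by (simp add: cv_def)
lemma cv_index[simp]: "i < dim_vec v \<Longrightarrow> cv v $ i = cnj (v $ i)" by (simp add: cv_def)
lemma cv_cv[simp]: "cv (cv v) = v" by (intro eq_vecI) auto

lemma cm_cm[simp]: "cm (cm M) = M" by (intro eq_matI) auto

lemma cm_mv: assumes "A \<in> carrier_mat n m" "v \<in> carrier_vec m"
  shows "cm A *\<^sub>v v = cv (A *\<^sub>v cv v)"
proof (intro eq_vecI)
  fix i assume "i < dim_vec (cv (A *\<^sub>v cv v))"
  hence i: "i < n" using assms by simp
  show "(cm A *\<^sub>v v) $ i = cv (A *\<^sub>v cv v) $ i"
    using i assms mv_index[of "cm A" n m v i] mv_index[of A n m "cv v" i] by simp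
qed (use assms in simp)

lemma herm_cm: "herm n M \<Longrightarrow> herm n (cm M)"
  unfolding herm_def by (auto intro!: eq_matI) (metis adj_index carrier_matD complex_cnj_cnj)

lemma mf_conj: assumes hM: "herm n M" shows "mat_fun n f (cm M) = cm (mat_fun n f M)"
proof (rule mf_char[OF herm_cm[OF hM]])
  have M: "M \<in> carrier_mat n n" using hM unfolding herm_def by auto
  have F: "mat_fun n f M \<in> carrier_mat n n" using mf_carrier[OF hM] .
  show "cm (mat_fun n f M) \<in> carrier_mat n n" using F by simp
  fix v \<mu> assume ev: "eigv n (cm M) v \<mu>"
  hence v: "v \<in> carrier_vec n" and e: "cm M *\<^sub>v v = complex_of_real \<mu> \<cdot>\<^sub>v v" unfolding eigv_def by auto
  have "M *\<^sub>v cv v = cv (cm M *\<^sub>v v)"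
    using cm_mv[OF cm_carrier[OF M] cv_carrier[OF v]] M by simp
  also have "\<dots> = complex_of_real \<mu> \<cdot>\<^sub>v cv v" unfolding e using v by (intro eq_vecI) auto
  finally have "mat_fun n f M *\<^sub>v cv v = complex_of_real (ftil f \<mu>) \<cdot>\<^sub>v cv v"
    using mf_eig[OF hM cv_carrier[OF v]] by simp
  hence "cv (mat_fun n f M *\<^sub>v cv v) = complex_of_real (ftil f \<mu>) \<cdot>\<^sub>v v"
    using v by (auto intro!: eq_vecI)
  thus "cm (mat_fun n f M) *\<^sub>v v = complex_of_real (ftil f \<mu>) \<cdot>\<^sub>v v"
    using cm_mv[OF F v] by simp
qed

lemma mtrace_cm: "M \<in> carrier_mat n n \<Longrightarrow> mtrace (cm M) = cnj (mtrace M)"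
  unfolding mtrace_def by (auto intro: sum.cong)

lemma mtrace_mult_comm: assumes "A \<in> carrier_mat n m" "B \<in> carrier_mat m n"
  shows "mtrace (A * B) = mtrace (B * A)"
proof -
  have "mtrace (A * B) = (\<Sum>i<n. \<Sum>j<m. A $$ (i,j) * B $$ (j,i))"
    unfolding mtrace_def using assms by (simp add: scalar_prod_def lessThan_atLeast0)
  also have "\<dots> = (\<Sum>j<m. \<Sum>i<n. B $$ (j,i) * A $$ (i,j))"
    by (subst sum.swap) (simp add: mult.commute)
  also have "\<dots> = mtrace (B * A)"
    unfolding mtrace_def using assms by (simp add: scalar_prod_def lessThan_atLeast0)
  finally show ?thesis .
qed

lemma mtrace_dg: "mtrace (dg n d) = complex_of_real (\<Sum>i<n. d i)"
  unfolding mtrace_def by (simp add: of_real_sum)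

lemma mtrace_decomp: assumes uU: "unitary n U"
  shows "mtrace (U * dg n d * adj U) = complex_of_real (\<Sum>i<n. d i)"
proof -
  have U: "U \<in> carrier_mat n n" using uU unfolding unitary_def by auto
  have "mtrace (U * dg n d * adj U) = mtrace (U * (dg n d * adj U))" using U by (simp add: massoc[of _ n])
  also have "\<dots> = mtrace ((dg n d * adj U) * U)" using U by (intro mtrace_mult_comm[of _ n n]) (auto intro: mclose)
  also have "\<dots> = mtrace (dg n d)" using U uU unfolding unitary_def by (simp add: massoc[of _ n])
  finally show ?thesis by (simp add: mtrace_dg)
qed

lemma col_eig: assumes uV: "unitary n V" and i: "i < n"
  shows "eigv n (V * dg n e * adj V) (col V i) (e i)"
proof -
  have V: "V \<in> carrier_mat n n" using uV unfolding unitary_def by auto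
  have VV: "adj V * V = 1\<^sub>m n" using uV unfolding unitary_def by auto
  have MV: "(V * dg n e * adj V) * V = V * dg n e" using V VV by (simp add: massoc[of _ n] mclose[of _ n])
  have Mc: "V * dg n e * adj V \<in> carrier_mat n n" using V by (meson adj_carrier dg_carrier mult_carrier_mat)
  have "(V * dg n e * adj V) *\<^sub>v col V i = col ((V * dg n e * adj V) * V) i"
    using col_mult2[OF Mc V i] by simp
  also have "\<dots> = col (V * dg n e) i" by (simp add: MV)
  also have "\<dots> = V *\<^sub>v col (dg n e) i" using col_mult2[OF V dg_carrier i] .
  also have "col (dg n e) i = complex_of_real (e i) \<cdot>\<^sub>v unit_vec n i"
    using i by (intro eq_vecI) (auto simp: unit_vec_def)
  also have "V *\<^sub>v (complex_of_real (e i) \<cdot>\<^sub>v unit_vec n i) = complex_of_real (e i) \<cdot>\<^sub>v col V i"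
    using V i by (simp add: mult_mat_vec[of _ n n] mv_unit)
  finally show ?thesis unfolding eigv_def using unitary_col_nz[OF uV i] V i by auto
qed

lemma trace_spec:
  assumes hM: "herm n M"
  shows "\<exists>d. mtrace M = complex_of_real (\<Sum>i<n. d i) \<and>
     mtrace (mat_fun n f M) = complex_of_real (\<Sum>i<n. ftil f (d i)) \<and>
     (psd n M \<longrightarrow> (\<forall>i<n. d i \<ge> 0))"
proof -
  obtain U d where uU: "unitary n U" and M: "M = U * dg n d * adj U"
    and mf: "mat_fun n f M = U * dg n (\<lambda>i. ftil f (d i)) * adj U"
    using mat_fun_decomp[OF hM] by blast
  have "psd n M \<longrightarrow> (\<forall>i<n. d i \<ge> 0)"
  proof (intro impI allI)
    fix i assume p: "psd n M" and i: "i < n"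
    have "eigv n M (col U i) (d i)" using col_eig[OF uU i] M by simp
    thus "d i \<ge> 0" using psd_eig_nonneg[OF p] by simp
  qed
  moreover have "mtrace M = complex_of_real (\<Sum>i<n. d i)" using mtrace_decomp[OF uU] M by simp
  moreover have "mtrace (mat_fun n f M) = complex_of_real (\<Sum>i<n. ftil f (d i))" using mtrace_decomp[OF uU] mf by simp
  ultimately show ?thesis by blast
qed

lemma herm_trace_real: assumes "herm n M" shows "mtrace M = complex_of_real (Re (mtrace M))"
  using trace_spec[OF assms, of id] by auto

lemma psd_XX: assumes X: "X \<in> carrier_mat k m" shows "psd k (X * adj X)"
proof -
  have XX: "X * adj X \<in> carrier_mat k k" using X by (meson adj_carrier mult_carrier_mat)
  have h: "adj (X * adj X) = X * adj X" using X adj_mult[of X k m "adj X" k] by simp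
  have "0 \<le> Re (\<Sum>i<k. cnj (v $ i) * ((X * adj X) *\<^sub>v v) $ i)" if v: "v \<in> carrier_vec k" for v
  proof -
    define w where "w = adj X *\<^sub>v v"
    have w: "w \<in> carrier_vec m" using X v w_def by (metis adj_carrier mult_mat_vec_carrier)
    have Xw: "(X * adj X) *\<^sub>v v = X *\<^sub>v w" using assoc_mult_mat_vec[OF X adj_carrier[OF X] v] w_def by simp
    have "(\<Sum>i<k. cnj (v $ i) * ((X * adj X) *\<^sub>v v) $ i) = (\<Sum>i<k. cnj (v $ i) * (\<Sum>j<m. X $$ (i,j) * w $ j))"
      unfolding Xw using X v w by (intro sum.cong) (auto simp: mv_index[of X k m] simp del: index_mult_mat_vec)
    also have "\<dots> = (\<Sum>j<m. w $ j * cnj (\<Sum>i<k. cnj (X $$ (i,j)) * v $ i))"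
      by (simp add: sum_distrib_left sum_distrib_right mult_ac) (rule sum.swap)
    also have "\<dots> = (\<Sum>j<m. complex_of_real ((cmod (w $ j))^2))"
    proof (intro sum.cong refl)
      fix j assume j: "j \<in> {..<m}"
      have "(\<Sum>i<k. cnj (X $$ (i,j)) * v $ i) = w $ j"
        using X v j mv_index[of "adj X" m k v j] by (simp add: w_def)
      thus "w $ j * cnj (\<Sum>i<k. cnj (X $$ (i,j)) * v $ i) = complex_of_real ((cmod (w $ j))^2)"
        by (metis complex_norm_square)
    qed
    finally show ?thesis by (simp flip: of_real_sum add: sum_nonneg)
  qed
  thus ?thesis unfolding psd_def using XX h by auto
qed

lemma psd_scale: assumes "psd n M" "c \<ge> 0" shows "psd n (complex_of_real c \<cdot>\<^sub>m M)"
proof -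
  have M: "M \<in> carrier_mat n n" using assms unfolding psd_def by auto
  have "adj (complex_of_real c \<cdot>\<^sub>m M) = complex_of_real c \<cdot>\<^sub>m adj M" by (intro eq_matI) auto
  moreover have "0 \<le> Re (\<Sum>i<n. cnj (v $ i) * ((complex_of_real c \<cdot>\<^sub>m M) *\<^sub>v v) $ i)" if v: "v \<in> carrier_vec n" for v
  proof -
    have "(\<Sum>i<n. cnj (v $ i) * ((complex_of_real c \<cdot>\<^sub>m M) *\<^sub>v v) $ i) = complex_of_real c * (\<Sum>i<n. cnj (v $ i) * (M *\<^sub>v v) $ i)"
      using M v by (simp add: sum_distrib_left mult_ac scalar_prod_def sum_distrib_left)
    moreover have "0 \<le> Re (\<Sum>i<n. cnj (v $ i) * (M *\<^sub>v v) $ i)" using assms v unfolding psd_def by auto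
    ultimately show ?thesis using assms by simp
  qed
  ultimately show ?thesis using assms M unfolding psd_def by auto
qed


lemma mcs: "z * cnj z = (complex_of_real (cmod z))^2" "cnj z * z = (complex_of_real (cmod z))^2"
  using complex_norm_square[of z] by (simp_all add: mult.commute)

lemma smult_mv: fixes A :: "complex mat" assumes "A \<in> carrier_mat n m" "v \<in> carrier_vec m"
  shows "(c \<cdot>\<^sub>m A) *\<^sub>v v = c \<cdot>\<^sub>v (A *\<^sub>v v)"
  using assms by (intro eq_vecI) (auto simp: scalar_prod_def sum_distrib_left mult.assoc)

lemma nz_index: "v \<in> carrier_vec n \<Longrightarrow> v \<noteq> 0\<^sub>v n \<Longrightarrow> \<exists>i<n. v $ i \<noteq> 0"
  by (metis carrier_vecD eq_vecI index_zero_vec(1,2))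

lemma smult_cancel: assumes "v \<in> carrier_vec n" "v \<noteq> 0\<^sub>v n"
  "complex_of_real a \<cdot>\<^sub>v v = complex_of_real b \<cdot>\<^sub>v v" shows "a = b"
proof -
  obtain i where i: "i < n" "v $ i \<noteq> 0" using nz_index[OF assms(1,2)] by blast
  have "complex_of_real a * v $ i = complex_of_real b * v $ i"
    using arg_cong[OF assms(3), of "\<lambda>x. x $ i"] i assms(1) by simp
  thus ?thesis using i by simp
qed

lemma mp_scale: assumes pM: "psd m M" and c: "c \<ge> 0"
  shows "mat_pow m (complex_of_real c \<cdot>\<^sub>m M) a = complex_of_real (c powr a) \<cdot>\<^sub>m mat_pow m M a"
  unfolding mat_pow_def
proof (rule mf_char)
  have hM: "herm m M" using psd_herm[OF pM] .
  have M: "M \<in> carrier_mat m m" using hM unfolding herm_def by auto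
  show "herm m (complex_of_real c \<cdot>\<^sub>m M)" using psd_herm[OF psd_scale[OF pM c]] .
  have F: "mat_fun m (\<lambda>x. x powr a) M \<in> carrier_mat m m" using mf_carrier[OF hM] .
  show "complex_of_real (c powr a) \<cdot>\<^sub>m mat_fun m (\<lambda>x. x powr a) M \<in> carrier_mat m m" using F by simp
  fix v \<mu> assume ev: "eigv m (complex_of_real c \<cdot>\<^sub>m M) v \<mu>"
  hence v: "v \<in> carrier_vec m" and v0: "v \<noteq> 0\<^sub>v m"
    and e: "complex_of_real c \<cdot>\<^sub>v (M *\<^sub>v v) = complex_of_real \<mu> \<cdot>\<^sub>v v"
    unfolding eigv_def using smult_mv[OF M] by auto
  show "(complex_of_real (c powr a) \<cdot>\<^sub>m mat_fun m (\<lambda>x. x powr a) M) *\<^sub>v v = complex_of_real (ftil (\<lambda>x. x powr a) \<mu>) \<cdot>\<^sub>v v"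
  proof (cases "c = 0")
    case True
    obtain i where i: "i < m" "v $ i \<noteq> 0" using nz_index[OF v v0] by blast
    have "(complex_of_real c \<cdot>\<^sub>v (M *\<^sub>v v)) $ i = (complex_of_real \<mu> \<cdot>\<^sub>v v) $ i" using e by simp
    hence "complex_of_real \<mu> * v $ i = 0" using True i M v by simp
    hence "\<mu> = 0" using i by simp
    thus ?thesis using True F v by (auto simp: smult_mv ftil_def intro!: eq_vecI)
  next
    case False
    hence cp: "c > 0" using c by simp
    have Mv: "M *\<^sub>v v = complex_of_real (\<mu> / c) \<cdot>\<^sub>v v"
    proof -
      have "M *\<^sub>v v = (1 / complex_of_real c) \<cdot>\<^sub>v (complex_of_real c \<cdot>\<^sub>v (M *\<^sub>v v))"
        using cp by (simp add: smult_smult_assoc)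
      also have "\<dots> = complex_of_real (\<mu> / c) \<cdot>\<^sub>v v" unfolding e by (simp add: smult_smult_assoc)
      finally show ?thesis .
    qed
    have nn: "\<mu> / c \<ge> 0" using psd_eig_nonneg[OF pM] Mv v v0 unfolding eigv_def by auto
    have "(complex_of_real (c powr a) \<cdot>\<^sub>m mat_fun m (\<lambda>x. x powr a) M) *\<^sub>v v
        = complex_of_real (c powr a) \<cdot>\<^sub>v (complex_of_real (ftil (\<lambda>x. x powr a) (\<mu> / c)) \<cdot>\<^sub>v v)"
      using smult_mv[OF F v] mf_eig[OF hM v Mv] by simp
    also have "\<dots> = complex_of_real (c powr a * ftil (\<lambda>x. x powr a) (\<mu> / c)) \<cdot>\<^sub>v v"
      by (simp add: smult_smult_assoc)
    also have "c powr a * ftil (\<lambda>x. x powr a) (\<mu> / c) = ftil (\<lambda>x. x powr a) \<mu>"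
      using cp nn by (auto simp: ftil_def powr_divide)
    finally show ?thesis .
  qed
qed

definition outer :: "nat \<Rightarrow> complex vec \<Rightarrow> complex mat" where
  "outer D \<psi> = mat D D (\<lambda>(k,l). \<psi> $ k * cnj (\<psi> $ l))"

lemma outer_XX: "\<psi> \<in> carrier_vec D \<Longrightarrow> outer D \<psi> = mat D 1 (\<lambda>(k,_). \<psi> $ k) * adj (mat D 1 (\<lambda>(k,_). \<psi> $ k))"
  by (intro eq_matI) (auto simp: outer_def scalar_prod_def)

lemma outer_psd: "\<psi> \<in> carrier_vec D \<Longrightarrow> psd D (outer D \<psi>)"
  using outer_XX psd_XX[of "mat D 1 (\<lambda>(k,_). \<psi> $ k)" D 1] by simp

lemma outer_mv: assumes "\<psi> \<in> carrier_vec D" "v \<in> carrier_vec D"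
  shows "outer D \<psi> *\<^sub>v v = (\<Sum>l<D. cnj (\<psi> $ l) * v $ l) \<cdot>\<^sub>v \<psi>"
  using assms by (intro eq_vecI) (auto simp: outer_def scalar_prod_def sum_distrib_left lessThan_atLeast0 mult_ac)

lemma rank1: assumes psi: "\<psi> \<in> carrier_vec D" and nrm: "(\<Sum>i<D. cmod (\<psi> $ i) ^ 2) = 1"
  shows "mat_pow D (outer D \<psi>) a = outer D \<psi>"
  unfolding mat_pow_def
proof (rule mf_char)
  show "herm D (outer D \<psi>)" using psd_herm[OF outer_psd[OF psi]] .
  show "outer D \<psi> \<in> carrier_mat D D" by (simp add: outer_def)
  fix v \<mu> assume ev: "eigv D (outer D \<psi>) v \<mu>"
  hence v: "v \<in> carrier_vec D" and v0: "v \<noteq> 0\<^sub>v D"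
    and e: "outer D \<psi> *\<^sub>v v = complex_of_real \<mu> \<cdot>\<^sub>v v" unfolding eigv_def by auto
  define c where "c = (\<Sum>l<D. cnj (\<psi> $ l) * v $ l)"
  have e2: "c \<cdot>\<^sub>v \<psi> = complex_of_real \<mu> \<cdot>\<^sub>v v" using e outer_mv[OF psi v] c_def by simp
  show "outer D \<psi> *\<^sub>v v = complex_of_real (ftil (\<lambda>x. x powr a) \<mu>) \<cdot>\<^sub>v v"
  proof (cases "\<mu> = 0")
    case True thus ?thesis using e by (simp add: ftil_def)
  next
    case False
    have "(\<Sum>k<D. cnj (\<psi> $ k) * (c \<cdot>\<^sub>v \<psi>) $ k) = c * (\<Sum>k<D. complex_of_real ((cmod (\<psi> $ k))^2))"
      using psi by (auto simp: sum_distrib_left mcs mult_ac intro!: sum.cong)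
    also have "\<dots> = c" using arg_cong[OF nrm, of complex_of_real] by (simp add: of_real_sum)
    finally have l: "(\<Sum>k<D. cnj (\<psi> $ k) * (c \<cdot>\<^sub>v \<psi>) $ k) = c" .
    have "(\<Sum>k<D. cnj (\<psi> $ k) * (complex_of_real \<mu> \<cdot>\<^sub>v v) $ k) = complex_of_real \<mu> * c"
      using v by (auto simp: c_def sum_distrib_left mult_ac intro!: sum.cong)
    hence "c = complex_of_real \<mu> * c" using l e2 by simp
    moreover have "c \<noteq> 0"
    proof
      assume "c = 0"
      obtain i where i: "i < D" "v $ i \<noteq> 0" using nz_index[OF v v0] by blast
      have "(c \<cdot>\<^sub>v \<psi>) $ i = (complex_of_real \<mu> \<cdot>\<^sub>v v) $ i" using e2 by simp
      hence "complex_of_real \<mu> * v $ i = 0" using \<open>c = 0\<close> i psi v by simp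
      thus False using i False by simp
    qed
    ultimately have "\<mu> = 1" by simp
    thus ?thesis using e by (simp add: ftil_def)
  qed
qed

lemma one1: "mat_pow 1 (mat 1 1 (\<lambda>_. complex_of_real c)) a = mat 1 1 (\<lambda>_. complex_of_real (ftil (\<lambda>x. x powr a) c))"
  unfolding mat_pow_def
proof (rule mf_char)
  show "herm 1 (mat 1 1 (\<lambda>_. complex_of_real c))" unfolding herm_def by (auto intro!: eq_matI)
  show "mat 1 1 (\<lambda>_. complex_of_real (ftil (\<lambda>x. x powr a) c)) \<in> carrier_mat 1 1" by simp
  fix v \<mu> assume ev: "eigv 1 (mat 1 1 (\<lambda>_. complex_of_real c)) v \<mu>"
  hence v: "v \<in> carrier_vec 1" and v0: "v \<noteq> 0\<^sub>v 1"
    and e: "mat 1 1 (\<lambda>_. complex_of_real c) *\<^sub>v v = complex_of_real \<mu> \<cdot>\<^sub>v v" unfolding eigv_def by auto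
  have "v $ 0 \<noteq> 0" using nz_index[OF v v0] by auto
  moreover have "complex_of_real c * v $ 0 = complex_of_real \<mu> * v $ 0"
    using arg_cong[OF e, of "\<lambda>x. x $ 0"] v by (simp add: scalar_prod_def)
  ultimately have "c = \<mu>" by simp
  thus "mat 1 1 (\<lambda>_. complex_of_real (ftil (\<lambda>x. x powr a) c)) *\<^sub>v v = complex_of_real (ftil (\<lambda>x. x powr a) \<mu>) \<cdot>\<^sub>v v"
    using v by (intro eq_vecI) (auto simp: scalar_prod_def)
qed

lemma mf_YY: assumes Y: "Y \<in> carrier_mat k m"
  shows "mtrace (mat_fun m f (adj Y * Y)) = mtrace (mat_fun k f (Y * adj Y))"
proof -
  define g where "g x = f x / x" for x
  have hYY: "herm k (Y * adj Y)" using psd_herm[OF psd_XX[OF Y]] .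
  have hYY': "herm m (adj Y * Y)" using psd_herm[OF psd_XX[OF adj_carrier[OF Y]]] by simp
  define G where "G = mat_fun k g (Y * adj Y)"
  have G: "G \<in> carrier_mat k k" using mf_carrier[OF hYY] G_def by simp
  have YYc: "Y * adj Y \<in> carrier_mat k k" using hYY unfolding herm_def by auto
  have e1: "mat_fun m f (adj Y * Y) = adj Y * G * Y"
  proof (rule mf_char[OF hYY'])
    show "adj Y * G * Y \<in> carrier_mat m m" using Y G by (meson adj_carrier mult_carrier_mat)
    fix v \<mu> assume ev: "eigv m (adj Y * Y) v \<mu>"
    hence v: "v \<in> carrier_vec m" and e: "(adj Y * Y) *\<^sub>v v = complex_of_real \<mu> \<cdot>\<^sub>v v" unfolding eigv_def by auto
    define u where "u = Y *\<^sub>v v"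
    have u: "u \<in> carrier_vec k" using Y v u_def by simp
    have e0: "adj Y *\<^sub>v u = complex_of_real \<mu> \<cdot>\<^sub>v v"
      using e assoc_mult_mat_vec[OF adj_carrier[OF Y] Y v] u_def by simp
    have "(Y * adj Y) *\<^sub>v u = Y *\<^sub>v (adj Y *\<^sub>v u)" using assoc_mult_mat_vec[OF Y adj_carrier[OF Y] u] .
    also have "\<dots> = complex_of_real \<mu> \<cdot>\<^sub>v u" unfolding e0 using mult_mat_vec[OF Y v] u_def by simp
    finally have Gu: "G *\<^sub>v u = complex_of_real (ftil g \<mu>) \<cdot>\<^sub>v u" using mf_eig[OF hYY u] G_def by simp
    have "(adj Y * G * Y) *\<^sub>v v = adj Y *\<^sub>v (G *\<^sub>v u)"
      using assoc_mult_mat_vec[OF mult_carrier_mat[OF adj_carrier[OF Y] G] Y v]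
        assoc_mult_mat_vec[OF adj_carrier[OF Y] G u] u_def by simp
    also have "\<dots> = complex_of_real (ftil g \<mu>) \<cdot>\<^sub>v (adj Y *\<^sub>v u)" unfolding Gu using mult_mat_vec[OF adj_carrier[OF Y] u] .
    also have "\<dots> = complex_of_real (ftil g \<mu> * \<mu>) \<cdot>\<^sub>v v" unfolding e0 by (simp add: smult_smult_assoc)
    also have "ftil g \<mu> * \<mu> = ftil f \<mu>" by (simp add: ftil_def g_def)
    finally show "(adj Y * G * Y) *\<^sub>v v = complex_of_real (ftil f \<mu>) \<cdot>\<^sub>v v" .
  qed
  have e2: "mat_fun k f (Y * adj Y) = G * (Y * adj Y)"
  proof (rule mf_char[OF hYY])
    show "G * (Y * adj Y) \<in> carrier_mat k k" using G YYc by (rule mult_carrier_mat)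
    fix v \<mu> assume ev: "eigv k (Y * adj Y) v \<mu>"
    hence v: "v \<in> carrier_vec k" and e: "(Y * adj Y) *\<^sub>v v = complex_of_real \<mu> \<cdot>\<^sub>v v" unfolding eigv_def by auto
    have "(G * (Y * adj Y)) *\<^sub>v v = G *\<^sub>v (complex_of_real \<mu> \<cdot>\<^sub>v v)"
      using assoc_mult_mat_vec[OF G YYc v] e by simp
    also have "\<dots> = complex_of_real \<mu> \<cdot>\<^sub>v (complex_of_real (ftil g \<mu>) \<cdot>\<^sub>v v)"
      using mult_mat_vec[OF G v] mf_eig[OF hYY v e] G_def by simp
    also have "\<dots> = complex_of_real (ftil f \<mu>) \<cdot>\<^sub>v v" by (simp add: smult_smult_assoc ftil_def g_def)
    finally show "(G * (Y * adj Y)) *\<^sub>v v = complex_of_real (ftil f \<mu>) \<cdot>\<^sub>v v" .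
  qed
  have "mtrace (adj Y * G * Y) = mtrace (adj Y * (G * Y))"
    using assoc_mult_mat[OF adj_carrier[OF Y] G Y] by simp
  also have "\<dots> = mtrace ((G * Y) * adj Y)"
    using Y G by (intro mtrace_mult_comm[of _ m k]) (auto intro: mult_carrier_mat)
  also have "\<dots> = mtrace (G * (Y * adj Y))" using assoc_mult_mat[OF G Y adj_carrier[OF Y]] by simp
  finally show ?thesis using e1 e2 by simp
qed

lemma pow_comp: assumes p: "psd m \<sigma>"
  shows "mat_pow m (mat_pow m \<sigma> a) b = mat_pow m \<sigma> (a * b)"
proof -
  have h: "herm m \<sigma>" using psd_herm[OF p] .
  have h2: "herm m (mat_pow m \<sigma> a)" unfolding mat_pow_def using mf_herm[OF h] .
  show ?thesis unfolding mat_pow_def[of m \<sigma> "a*b"]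
  proof (rule mf_char[OF h, symmetric])
    show "mat_pow m (mat_pow m \<sigma> a) b \<in> carrier_mat m m" unfolding mat_pow_def[of m "mat_pow m \<sigma> a"] using mf_carrier[OF h2] .
    fix v \<mu> assume ev: "eigv m \<sigma> v \<mu>"
    hence v: "v \<in> carrier_vec m" and e: "\<sigma> *\<^sub>v v = complex_of_real \<mu> \<cdot>\<^sub>v v" unfolding eigv_def by auto
    have nn: "\<mu> \<ge> 0" using psd_eig_nonneg[OF p ev] .
    have e1: "mat_pow m \<sigma> a *\<^sub>v v = complex_of_real (ftil (\<lambda>x. x powr a) \<mu>) \<cdot>\<^sub>v v"
      unfolding mat_pow_def using mf_eig[OF h v e] .
    have "mat_pow m (mat_pow m \<sigma> a) b *\<^sub>v v = complex_of_real (ftil (\<lambda>x. x powr b) (ftil (\<lambda>x. x powr a) \<mu>)) \<cdot>\<^sub>v v"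
      unfolding mat_pow_def[of m "mat_pow m \<sigma> a"] using mf_eig[OF h2 v e1] .
    also have "ftil (\<lambda>x. x powr b) (ftil (\<lambda>x. x powr a) \<mu>) = ftil (\<lambda>x. x powr (a * b)) \<mu>"
      using nn by (auto simp: ftil_def powr_powr)
    finally show "mat_pow m (mat_pow m \<sigma> a) b *\<^sub>v v = complex_of_real (ftil (\<lambda>x. x powr (a * b)) \<mu>) \<cdot>\<^sub>v v" .
  qed
qed

lemma pow_sandwich: assumes p: "psd m \<sigma>"
  shows "mat_pow m \<sigma> s * \<sigma> * mat_pow m \<sigma> s = mat_pow m \<sigma> (2 * s + 1)"
proof -
  have h: "herm m \<sigma>" using psd_herm[OF p] .
  have S: "mat_pow m \<sigma> s \<in> carrier_mat m m" unfolding mat_pow_def using mf_carrier[OF h] .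
  have sg: "\<sigma> \<in> carrier_mat m m" using h unfolding herm_def by auto
  show ?thesis unfolding mat_pow_def[of m \<sigma> "2*s+1"]
  proof (rule mf_char[OF h, symmetric])
    show "mat_pow m \<sigma> s * \<sigma> * mat_pow m \<sigma> s \<in> carrier_mat m m" using mult_carrier_mat[OF mult_carrier_mat[OF S sg] S] .
    fix v \<mu> assume ev: "eigv m \<sigma> v \<mu>"
    hence v: "v \<in> carrier_vec m" and e: "\<sigma> *\<^sub>v v = complex_of_real \<mu> \<cdot>\<^sub>v v" unfolding eigv_def by auto
    have nn: "\<mu> \<ge> 0" using psd_eig_nonneg[OF p ev] .
    have e1: "mat_pow m \<sigma> s *\<^sub>v v = complex_of_real (ftil (\<lambda>x. x powr s) \<mu>) \<cdot>\<^sub>v v"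
      unfolding mat_pow_def using mf_eig[OF h v e] .
    have "(mat_pow m \<sigma> s * \<sigma> * mat_pow m \<sigma> s) *\<^sub>v v = mat_pow m \<sigma> s *\<^sub>v (\<sigma> *\<^sub>v (mat_pow m \<sigma> s *\<^sub>v v))"
      using triple_mv[OF S sg S v] .
    also have "\<sigma> *\<^sub>v (mat_pow m \<sigma> s *\<^sub>v v) = complex_of_real (ftil (\<lambda>x. x powr s) \<mu> * \<mu>) \<cdot>\<^sub>v v"
      unfolding e1 mult_mat_vec[OF sg v] e smult_smult_assoc by simp
    also have "mat_pow m \<sigma> s *\<^sub>v (complex_of_real (ftil (\<lambda>x. x powr s) \<mu> * \<mu>) \<cdot>\<^sub>v v)
       = complex_of_real (ftil (\<lambda>x. x powr s) \<mu> * \<mu> * ftil (\<lambda>x. x powr s) \<mu>) \<cdot>\<^sub>v v"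
      unfolding mult_mat_vec[OF S v] e1 smult_smult_assoc by simp
    also have "ftil (\<lambda>x. x powr s) \<mu> * \<mu> * ftil (\<lambda>x. x powr s) \<mu> = ftil (\<lambda>x. x powr (2 * s + 1)) \<mu>"
    proof (cases "\<mu> = 0")
      case False
      hence mp: "\<mu> > 0" using nn by simp
      have "\<mu> powr (2 * s + 1) = \<mu> powr (s + s + 1)" by (rule arg_cong[where f="\<lambda>t. \<mu> powr t"]) simp
      also have "\<dots> = \<mu> powr s * \<mu> powr s * \<mu> powr 1" by (simp only: powr_add)
      also have "\<mu> powr 1 = \<mu>" using mp by simp
      finally have "\<mu> powr s * \<mu> powr s * \<mu> = \<mu> powr (2 * s + 1)" by simp
      thus ?thesis using False unfolding ftil_def by (simp add: mult.commute mult.left_commute)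
    qed (simp add: ftil_def)
    finally show "(mat_pow m \<sigma> s * \<sigma> * mat_pow m \<sigma> s) *\<^sub>v v = complex_of_real (ftil (\<lambda>x. x powr (2 * s + 1)) \<mu>) \<cdot>\<^sub>v v" .
  qed
qed




definition blk :: "nat \<Rightarrow> nat \<Rightarrow> (nat \<Rightarrow> complex mat) \<Rightarrow> complex mat" where
  "blk m n M = mat (m*n) (m*n) (\<lambda>(i,j). if i mod n = j mod n then M (i mod n) $$ (i div n, j div n) else 0)"

definition kronI :: "nat \<Rightarrow> nat \<Rightarrow> complex mat \<Rightarrow> complex mat" where
  "kronI a b X = mat (a*b) (a*b) (\<lambda>(k,l). if k mod b = l mod b then X $$ (k div b, l div b) else 0)"

lemma blk_carrier[simp]: "blk m n M \<in> carrier_mat (m*n) (m*n)" by (simp add: blk_def)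
lemma blk_dims[simp]: "dim_row (blk m n M) = m*n" "dim_col (blk m n M) = m*n" by (auto simp: blk_def)
lemma blk_index: "i < m*n \<Longrightarrow> j < m*n \<Longrightarrow>
   blk m n M $$ (i,j) = (if i mod n = j mod n then M (i mod n) $$ (i div n, j div n) else 0)"
  by (simp add: blk_def)

lemma kronI_carrier[simp]: "kronI a b X \<in> carrier_mat (a*b) (a*b)" by (simp add: kronI_def)

lemma div_lt: "i < m * n \<Longrightarrow> i div n < (m::nat)" by (cases "n = 0") (auto simp: div_less_iff_less_mult)
lemma mod_lt: "i < m * n \<Longrightarrow> i mod n < (n::nat)" by (cases "n = 0") auto

lemma pair_lt: "k < m \<Longrightarrow> y < (n::nat) \<Longrightarrow> k*n + y < m*n"
proof -
  assume k: "k < m" and y: "y < n"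
  have "k*n + y < Suc k * n" using y by simp
  also have "\<dots> \<le> m * n" using k by (intro mult_le_mono1) simp
  finally show ?thesis .
qed

lemma sum_pair: fixes f :: "nat \<Rightarrow> 'a::comm_monoid_add" shows "(\<Sum>i<m*n. f i) = (\<Sum>k<m. \<Sum>x<n. f (k*n + x))"
proof -
  have "(\<Sum>i<m*n. f i) = (\<Sum>k<m. sum f {k * n ..< k * n + n})"
    using sum.nat_group[of f n m] by simp
  also have "\<dots> = (\<Sum>k<m. \<Sum>x<n. f (k*n + x))"
  proof (rule sum.cong[OF refl])
    fix k
    have "sum f {k * n ..< k * n + n} = (\<Sum>x = 0..<n. f (x + k * n))"
      using sum.shift_bounds_nat_ivl[of f 0 "k*n" n] by (simp add: add.commute)
    thus "sum f {k * n ..< k * n + n} = (\<Sum>x<n. f (k*n + x))" by (simp add: lessThan_atLeast0 add.commute)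
  qed
  finally show ?thesis .
qed

lemma blk_adj: assumes "\<And>x. x < n \<Longrightarrow> M x \<in> carrier_mat m m"
  shows "adj (blk m n M) = blk m n (\<lambda>x. adj (M x))"
proof (rule eq_matI)
  fix i j assume "i < dim_row (blk m n (\<lambda>x. adj (M x)))" "j < dim_col (blk m n (\<lambda>x. adj (M x)))"
  hence i: "i < m*n" and j: "j < m*n" by auto
  show "adj (blk m n M) $$ (i,j) = blk m n (\<lambda>x. adj (M x)) $$ (i,j)"
    using i j assms[OF mod_lt[OF i]] div_lt[OF i] div_lt[OF j] by (auto simp: blk_index)
qed auto

lemma herm_blk: assumes "\<And>x. x < n \<Longrightarrow> herm m (M x)" shows "herm (m*n) (blk m n M)"
proof -
  have c: "\<And>x. x < n \<Longrightarrow> M x \<in> carrier_mat m m" using assms unfolding herm_def by auto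
  have "blk m n (\<lambda>x. adj (M x)) = blk m n M"
    using assms unfolding herm_def by (intro eq_matI) (auto simp: blk_index mod_lt)
  thus ?thesis using blk_adj[OF c] unfolding herm_def by simp
qed

lemma blk_mult: assumes "\<And>x. x < n \<Longrightarrow> M x \<in> carrier_mat m m" "\<And>x. x < n \<Longrightarrow> N x \<in> carrier_mat m m"
  shows "blk m n M * blk m n N = blk m n (\<lambda>x. M x * N x)"
proof (rule eq_matI)
  fix i j assume "i < dim_row (blk m n (\<lambda>x. M x * N x))" "j < dim_col (blk m n (\<lambda>x. M x * N x))"
  hence i: "i < m*n" and j: "j < m*n" by auto
  have nn: "i mod n < n" "i div n < m" "j div n < m" using mod_lt[OF i] div_lt[OF i] div_lt[OF j] .
  have "(blk m n M * blk m n N) $$ (i,j) = (\<Sum>l<m*n. blk m n M $$ (i,l) * blk m n N $$ (l,j))"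
    using i j by (simp add: scalar_prod_def lessThan_atLeast0)
  also have "\<dots> = (\<Sum>k<m. \<Sum>y<n. blk m n M $$ (i,k*n+y) * blk m n N $$ (k*n+y,j))" by (rule sum_pair)
  also have "\<dots> = (\<Sum>k<m. \<Sum>y<n. if y = i mod n then (if i mod n = j mod n then M (i mod n) $$ (i div n, k) * N (i mod n) $$ (k, j div n) else 0) else 0)"
  proof (intro sum.cong refl)
    fix k y assume k: "k \<in> {..<m}" and y: "y \<in> {..<n}"
    have ky: "k*n + y < m*n" using k y pair_lt by simp
    show "blk m n M $$ (i,k*n+y) * blk m n N $$ (k*n+y,j) = (if y = i mod n then (if i mod n = j mod n then M (i mod n) $$ (i div n, k) * N (i mod n) $$ (k, j div n) else 0) else 0)"
      using i j ky y by (auto simp: blk_index)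
  qed
  also have "\<dots> = (if i mod n = j mod n then \<Sum>k<m. M (i mod n) $$ (i div n, k) * N (i mod n) $$ (k, j div n) else 0)"
    using nn by (simp add: sum.delta')
  also have "\<dots> = blk m n (\<lambda>x. M x * N x) $$ (i,j)"
    using i j nn assms[of "i mod n"] assms[of "j mod n"] mod_lt[OF j] by (simp add: blk_index scalar_prod_def lessThan_atLeast0)
  finally show "(blk m n M * blk m n N) $$ (i,j) = blk m n (\<lambda>x. M x * N x) $$ (i,j)" .
qed auto


lemma blk_cong: "(\<And>x. x < n \<Longrightarrow> M x = N x) \<Longrightarrow> blk m n M = blk m n N"
  by (intro eq_matI) (auto simp: blk_index mod_lt)

lemma blk_mv: assumes N: "\<And>x. x < n \<Longrightarrow> N x \<in> carrier_mat m m" and v: "v \<in> carrier_vec (m*n)"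
  and x: "x < n" and k: "k < m"
  shows "(blk m n N *\<^sub>v v) $ (k*n+x) = (N x *\<^sub>v vec m (\<lambda>k. v $ (k*n + x))) $ k"
proof -
  have kx: "k*n + x < m*n" using pair_lt[OF k x] .
  have "(blk m n N *\<^sub>v v) $ (k*n+x) = (\<Sum>l<m*n. blk m n N $$ (k*n+x, l) * v $ l)"
    using mv_index[OF blk_carrier v kx] .
  also have "\<dots> = (\<Sum>k'<m. \<Sum>y<n. blk m n N $$ (k*n+x, k'*n+y) * v $ (k'*n+y))" by (rule sum_pair)
  also have "\<dots> = (\<Sum>k'<m. \<Sum>y<n. if y = x then N x $$ (k, k') * v $ (k'*n+x) else 0)"
  proof (intro sum.cong refl)
    fix k' y assume k': "k' \<in> {..<m}" and y: "y \<in> {..<n}"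
    have ky: "k'*n + y < m*n" using pair_lt k' y by simp
    show "blk m n N $$ (k*n+x, k'*n+y) * v $ (k'*n+y) = (if y = x then N x $$ (k, k') * v $ (k'*n+x) else 0)"
      using kx ky x y by (auto simp: blk_index)
  qed
  also have "\<dots> = (\<Sum>k'<m. N x $$ (k, k') * v $ (k'*n+x))" using x by (simp add: sum.delta')
  also have "\<dots> = (N x *\<^sub>v vec m (\<lambda>k. v $ (k*n + x))) $ k"
    using mv_index[OF N[OF x] _ k, of "vec m (\<lambda>k. v $ (k*n + x))"] by simp
  finally show ?thesis .
qed

lemma blk_fun: assumes h: "\<And>x. x < n \<Longrightarrow> herm m (M x)"
  shows "mat_fun (m*n) f (blk m n M) = blk m n (\<lambda>x. mat_fun m f (M x))"
proof (rule mf_char[OF herm_blk[OF h]])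
  show "blk m n (\<lambda>x. mat_fun m f (M x)) \<in> carrier_mat (m * n) (m * n)" by simp
  have Mc: "\<And>x. x < n \<Longrightarrow> M x \<in> carrier_mat m m" using h unfolding herm_def by auto
  have Fc: "\<And>x. x < n \<Longrightarrow> mat_fun m f (M x) \<in> carrier_mat m m" using mf_carrier h by blast
  fix v \<mu> assume ev: "eigv (m*n) (blk m n M) v \<mu>"
  hence v: "v \<in> carrier_vec (m*n)" and e: "blk m n M *\<^sub>v v = complex_of_real \<mu> \<cdot>\<^sub>v v" unfolding eigv_def by auto
  define cmp where "cmp x = vec m (\<lambda>k. v $ (k*n + x))" for x
  have cx: "M x *\<^sub>v cmp x = complex_of_real \<mu> \<cdot>\<^sub>v cmp x" if x: "x < n" for x
  proof (intro eq_vecI)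
    fix k assume "k < dim_vec (complex_of_real \<mu> \<cdot>\<^sub>v cmp x)"
    hence k: "k < m" by (simp add: cmp_def)
    have "(M x *\<^sub>v cmp x) $ k = (blk m n M *\<^sub>v v) $ (k*n+x)" using blk_mv[OF Mc v x k] cmp_def by simp
    also have "\<dots> = complex_of_real \<mu> * v $ (k*n+x)" unfolding e using v pair_lt[OF k x] by simp
    finally show "(M x *\<^sub>v cmp x) $ k = (complex_of_real \<mu> \<cdot>\<^sub>v cmp x) $ k" using k by (simp add: cmp_def)
  qed (use Mc[OF x] in \<open>simp add: cmp_def\<close>)
  show "blk m n (\<lambda>x. mat_fun m f (M x)) *\<^sub>v v = complex_of_real (ftil f \<mu>) \<cdot>\<^sub>v v"
  proof (intro eq_vecI)
    fix i assume "i < dim_vec (complex_of_real (ftil f \<mu>) \<cdot>\<^sub>v v)"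
    hence i: "i < m*n" using v by simp
    define k x where "k = i div n" and "x = i mod n"
    have k: "k < m" and x: "x < n" using div_lt[OF i] mod_lt[OF i] k_def x_def by auto
    have ieq: "i = k*n + x" using k_def x_def by simp
    have cm: "cmp x \<in> carrier_vec m" by (simp add: cmp_def)
    have "(blk m n (\<lambda>x. mat_fun m f (M x)) *\<^sub>v v) $ i = (mat_fun m f (M x) *\<^sub>v cmp x) $ k"
      unfolding ieq using blk_mv[OF Fc v x k] cmp_def by simp
    also have "\<dots> = complex_of_real (ftil f \<mu>) * cmp x $ k" using mf_eig[OF h[OF x] cm cx[OF x]] k by (simp add: cmp_def)
    also have "\<dots> = (complex_of_real (ftil f \<mu>) \<cdot>\<^sub>v v) $ i" using v i k unfolding ieq by (simp add: cmp_def)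
    finally show "(blk m n (\<lambda>x. mat_fun m f (M x)) *\<^sub>v v) $ i = (complex_of_real (ftil f \<mu>) \<cdot>\<^sub>v v) $ i" .
  qed (use v in simp)
qed

lemma blk_trace: assumes "\<And>x. x < n \<Longrightarrow> M x \<in> carrier_mat m m"
  shows "mtrace (blk m n M) = (\<Sum>x<n. mtrace (M x))"
proof -
  have "mtrace (blk m n M) = (\<Sum>i<m*n. blk m n M $$ (i,i))" by (simp add: mtrace_def)
  also have "\<dots> = (\<Sum>k<m. \<Sum>x<n. blk m n M $$ (k*n+x,k*n+x))" by (rule sum_pair)
  also have "\<dots> = (\<Sum>k<m. \<Sum>x<n. M x $$ (k,k))"
    by (intro sum.cong refl) (auto simp: blk_index pair_lt)
  also have "\<dots> = (\<Sum>x<n. \<Sum>k<m. M x $$ (k,k))" by (rule sum.swap)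
  also have "\<dots> = (\<Sum>x<n. mtrace (M x))" using assms by (intro sum.cong refl) (auto simp: mtrace_def)
  finally show ?thesis .
qed

lemma blk_smult: assumes "\<And>x. x < n \<Longrightarrow> M x \<in> carrier_mat m m"
  shows "c \<cdot>\<^sub>m blk m n M = blk m n (\<lambda>x. c \<cdot>\<^sub>m M x)"
proof (rule eq_matI)
  fix i j assume "i < dim_row (blk m n (\<lambda>x. c \<cdot>\<^sub>m M x))" "j < dim_col (blk m n (\<lambda>x. c \<cdot>\<^sub>m M x))"
  hence i: "i < m*n" and j: "j < m*n" by auto
  show "(c \<cdot>\<^sub>m blk m n M) $$ (i,j) = blk m n (\<lambda>x. c \<cdot>\<^sub>m M x) $$ (i,j)"
    using i j div_lt[OF i] div_lt[OF j] assms[OF mod_lt[OF i]] by (auto simp: blk_index)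
qed auto

lemma pt1: "ptrace_mid a b n (blk (a*b) n M) = blk a n (\<lambda>x. ptrace_mid a b 1 (M x))"
proof (rule eq_matI)
  fix i j assume "i < dim_row (blk a n (\<lambda>x. ptrace_mid a b 1 (M x)))" "j < dim_col (blk a n (\<lambda>x. ptrace_mid a b 1 (M x)))"
  hence i: "i < a*n" and j: "j < a*n" by auto
  have mi: "i mod n < n" "j mod n < n" using mod_lt i j by auto
  have di: "i div n < a" "j div n < a" using div_lt i j by auto
  have "ptrace_mid a b n (blk (a*b) n M) $$ (i,j) =
     (\<Sum>k<b. blk (a*b) n M $$ (((i div n)*b + k)*n + i mod n, ((j div n)*b + k)*n + j mod n))"
    using i j by (simp add: ptrace_mid_def)
  also have "\<dots> = (\<Sum>k<b. if i mod n = j mod n then M (i mod n) $$ ((i div n)*b + k, (j div n)*b + k) else 0)"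
  proof (intro sum.cong refl)
    fix k assume k: "k \<in> {..<b}"
    have l1: "(i div n)*b + k < a*b" "(j div n)*b + k < a*b" using pair_lt di k by auto
    have l2: "((i div n)*b + k)*n + i mod n < a*b*n" "((j div n)*b + k)*n + j mod n < a*b*n"
      using pair_lt[OF l1(1) mi(1)] pair_lt[OF l1(2) mi(2)] by auto
    show "blk (a*b) n M $$ (((i div n)*b + k)*n + i mod n, ((j div n)*b + k)*n + j mod n) =
        (if i mod n = j mod n then M (i mod n) $$ ((i div n)*b + k, (j div n)*b + k) else 0)"
      using l2 mi by (simp add: blk_index)
  qed
  also have "\<dots> = blk a n (\<lambda>x. ptrace_mid a b 1 (M x)) $$ (i,j)"
    using i j di by (auto simp: blk_index ptrace_mid_def)
  finally show "ptrace_mid a b n (blk (a*b) n M) $$ (i,j) = blk a n (\<lambda>x. ptrace_mid a b 1 (M x)) $$ (i,j)" .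
qed (auto simp: ptrace_mid_def)

lemma pt2: "ptrace_mid 1 a (b*n) (blk (a*b) n M) = blk b n (\<lambda>x. ptrace_mid 1 a b (M x))"
proof (rule eq_matI)
  fix i j assume "i < dim_row (blk b n (\<lambda>x. ptrace_mid 1 a b (M x)))" "j < dim_col (blk b n (\<lambda>x. ptrace_mid 1 a b (M x)))"
  hence i: "i < b*n" and j: "j < b*n" by auto
  have mi: "i mod n < n" "j mod n < n" using mod_lt i j by auto
  have di: "i div n < b" "j div n < b" using div_lt i j by auto
  have "ptrace_mid 1 a (b*n) (blk (a*b) n M) $$ (i,j) = (\<Sum>k<a. blk (a*b) n M $$ (k*(b*n) + i, k*(b*n) + j))"
    using i j by (simp add: ptrace_mid_def)
  also have "\<dots> = (\<Sum>k<a. if i mod n = j mod n then M (i mod n) $$ (k*b + i div n, k*b + j div n) else 0)"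
  proof (intro sum.cong refl)
    fix k assume k: "k \<in> {..<a}"
    have e1: "k*(b*n) + i = (k*b + i div n)*n + i mod n" "k*(b*n) + j = (k*b + j div n)*n + j mod n"
      by (simp_all add: algebra_simps)
    have l1: "k*b + i div n < a*b" "k*b + j div n < a*b" using pair_lt di k by auto
    have l2: "(k*b + i div n)*n + i mod n < a*b*n" "(k*b + j div n)*n + j mod n < a*b*n"
      using pair_lt[OF l1(1) mi(1)] pair_lt[OF l1(2) mi(2)] by auto
    show "blk (a*b) n M $$ (k*(b*n) + i, k*(b*n) + j) = (if i mod n = j mod n then M (i mod n) $$ (k*b + i div n, k*b + j div n) else 0)"
      unfolding e1 using l2 mi by (simp add: blk_index)
  qed
  also have "\<dots> = blk b n (\<lambda>x. ptrace_mid 1 a b (M x)) $$ (i,j)"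
    using i j di by (auto simp: blk_index ptrace_mid_def)
  finally show "ptrace_mid 1 a (b*n) (blk (a*b) n M) $$ (i,j) = blk b n (\<lambda>x. ptrace_mid 1 a b (M x)) $$ (i,j)" .
qed (auto simp: ptrace_mid_def)

lemma pt_id: "id_mid a b n (blk a n S) = blk (a*b) n (\<lambda>x. kronI a b (S x))"
proof (rule eq_matI)
  fix i j assume "i < dim_row (blk (a*b) n (\<lambda>x. kronI a b (S x)))" "j < dim_col (blk (a*b) n (\<lambda>x. kronI a b (S x)))"
  hence i: "i < a*b*n" and j: "j < a*b*n" by auto
  have mi: "i mod n < n" "j mod n < n" using mod_lt i j by auto
  have di: "i div n < a*b" "j div n < a*b" using div_lt i j by auto
  have dd: "i div (b*n) = i div n div b" "j div (b*n) = j div n div b" by (metis div_mult2_eq mult.commute)+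
  have dl: "i div n div b < a" "j div n div b < a" using div_lt di by auto
  have u: "(i div (b*n))*n + i mod n < a*n" "(j div (b*n))*n + j mod n < a*n"
    unfolding dd using pair_lt dl mi by auto
  show "id_mid a b n (blk a n S) $$ (i,j) = blk (a*b) n (\<lambda>x. kronI a b (S x)) $$ (i,j)"
    using i j u mi di unfolding id_mid_def by (auto simp: blk_index kronI_def dd)
qed (auto simp: id_mid_def)




lemma herm_kron: assumes "herm a X" shows "herm (a*b) (kronI a b X)"
proof -
  have X: "X \<in> carrier_mat a a" and h: "adj X = X" using assms unfolding herm_def by auto
  have "adj (kronI a b X) = kronI a b X"
  proof (rule eq_matI)
    fix i j assume "i < dim_row (kronI a b X)" "j < dim_col (kronI a b X)"
    hence i: "i < a*b" and j: "j < a*b" by (auto simp: kronI_def)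
    have "cnj (X $$ (j div b, i div b)) = X $$ (i div b, j div b)"
      using div_lt[OF i] div_lt[OF j] X arg_cong[OF h, of "\<lambda>M. M $$ (i div b, j div b)"] by simp
    thus "adj (kronI a b X) $$ (i,j) = kronI a b X $$ (i,j)" using i j by (auto simp: kronI_def)
  qed (auto simp: kronI_def)
  thus ?thesis unfolding herm_def by simp
qed

lemma col_mat_mult: assumes K: "K \<in> carrier_mat D D" and psi: "\<psi> \<in> carrier_vec D"
  shows "K * mat D 1 (\<lambda>(k,_). \<psi> $ k) = mat D 1 (\<lambda>(k,_). (K *\<^sub>v \<psi>) $ k)"
  using K psi by (intro eq_matI) (auto simp: scalar_prod_def)

lemma sandwich_outer: assumes hK: "herm D K" and psi: "\<psi> \<in> carrier_vec D"
  shows "K * outer D \<psi> * K = outer D (K *\<^sub>v \<psi>)"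
proof -
  have K: "K \<in> carrier_mat D D" and h: "adj K = K" using hK unfolding herm_def by auto
  define C where "C = mat D 1 (\<lambda>(k,_). \<psi> $ k)"
  have C: "C \<in> carrier_mat D 1" by (simp add: C_def)
  have "K * outer D \<psi> * K = K * (C * adj C) * K" using outer_XX[OF psi] C_def by simp
  also have "\<dots> = (K * C) * (adj C * K)"
    using assoc_mult_mat[OF K C adj_carrier[OF C], symmetric]
      assoc_mult_mat[OF mult_carrier_mat[OF K C] adj_carrier[OF C] K] by simp
  also have "adj C * K = adj (K * C)" using adj_mult[OF K C] h by simp
  also have "K * C = mat D 1 (\<lambda>(k,_). (K *\<^sub>v \<psi>) $ k)" using col_mat_mult[OF K psi] C_def by simp
  also have "\<dots> * adj \<dots> = outer D (K *\<^sub>v \<psi>)" using outer_XX[of "K *\<^sub>v \<psi>" D] K psi by simp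
  finally show ?thesis .
qed

lemma pt_outer: assumes phi: "\<phi> \<in> carrier_vec (a*b)"
  shows "ptrace_mid 1 a b (outer (a*b) \<phi>) = adj (mat a b (\<lambda>(i,j). cnj (\<phi> $ (i*b + j)))) * mat a b (\<lambda>(i,j). cnj (\<phi> $ (i*b + j)))"
proof (rule eq_matI)
  fix i j assume "i < dim_row (adj (mat a b (\<lambda>(i,j). cnj (\<phi> $ (i*b + j)))) * mat a b (\<lambda>(i,j). cnj (\<phi> $ (i*b + j))))"
    "j < dim_col (adj (mat a b (\<lambda>(i,j). cnj (\<phi> $ (i*b + j)))) * mat a b (\<lambda>(i,j). cnj (\<phi> $ (i*b + j))))"
  hence i: "i < b" and j: "j < b" by auto
  have "ptrace_mid 1 a b (outer (a*b) \<phi>) $$ (i,j) = (\<Sum>k<a. outer (a*b) \<phi> $$ (k*b + i, k*b + j))"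
    using i j by (simp add: ptrace_mid_def)
  also have "\<dots> = (\<Sum>k<a. \<phi> $ (k*b + i) * cnj (\<phi> $ (k*b + j)))"
    using i j pair_lt by (intro sum.cong refl) (auto simp: outer_def)
  also have "\<dots> = (adj (mat a b (\<lambda>(i,j). cnj (\<phi> $ (i*b + j)))) * mat a b (\<lambda>(i,j). cnj (\<phi> $ (i*b + j)))) $$ (i,j)"
    using i j by (simp add: scalar_prod_def lessThan_atLeast0)
  finally show "ptrace_mid 1 a b (outer (a*b) \<phi>) $$ (i,j) = (adj (mat a b (\<lambda>(i,j). cnj (\<phi> $ (i*b + j)))) * mat a b (\<lambda>(i,j). cnj (\<phi> $ (i*b + j)))) $$ (i,j)" .
qed (auto simp: ptrace_mid_def)

lemma ZZ_cm: "mat a b (\<lambda>(i,j). cnj (\<phi> $ (i*b + j))) * adj (mat a b (\<lambda>(i,j). cnj (\<phi> $ (i*b + j))))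
   = cm (mat a b (\<lambda>(i,j). \<phi> $ (i*b + j)) * adj (mat a b (\<lambda>(i,j). \<phi> $ (i*b + j))))"
  by (intro eq_matI) (auto simp: scalar_prod_def)

lemma kron_Phi: assumes S: "S \<in> carrier_mat a a" and psi: "\<psi> \<in> carrier_vec (a*b)"
  shows "mat a b (\<lambda>(i,j). (kronI a b S *\<^sub>v \<psi>) $ (i*b + j)) = S * mat a b (\<lambda>(i,j). \<psi> $ (i*b + j))"
proof (rule eq_matI)
  fix i j assume "i < dim_row (S * mat a b (\<lambda>(i,j). \<psi> $ (i*b + j)))" "j < dim_col (S * mat a b (\<lambda>(i,j). \<psi> $ (i*b + j)))"
  hence i: "i < a" and j: "j < b" using S by auto
  have ij: "i*b + j < a*b" using pair_lt[OF i j] .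
  have "(kronI a b S *\<^sub>v \<psi>) $ (i*b + j) = (\<Sum>l<a*b. kronI a b S $$ (i*b+j, l) * \<psi> $ l)"
    using mv_index[OF kronI_carrier psi ij] .
  also have "\<dots> = (\<Sum>k<a. \<Sum>y<b. kronI a b S $$ (i*b+j, k*b+y) * \<psi> $ (k*b+y))" by (rule sum_pair)
  also have "\<dots> = (\<Sum>k<a. \<Sum>y<b. if y = j then S $$ (i,k) * \<psi> $ (k*b+j) else 0)"
    using ij j pair_lt by (intro sum.cong refl) (auto simp: kronI_def)
  also have "\<dots> = (\<Sum>k<a. S $$ (i,k) * \<psi> $ (k*b+j))" using j by (simp add: sum.delta')
  also have "\<dots> = (S * mat a b (\<lambda>(i,j). \<psi> $ (i*b + j))) $$ (i,j)"
    using S i j by (simp add: scalar_prod_def lessThan_atLeast0)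
  finally show "mat a b (\<lambda>(i,j). (kronI a b S *\<^sub>v \<psi>) $ (i*b + j)) $$ (i,j) = (S * mat a b (\<lambda>(i,j). \<psi> $ (i*b + j))) $$ (i,j)"
    using i j by simp
qed (use S in auto)

lemma pt_outer2: "ptrace_mid a b 1 (outer (a*b) \<psi>) = mat a b (\<lambda>(i,j). \<psi> $ (i*b + j)) * adj (mat a b (\<lambda>(i,j). \<psi> $ (i*b + j)))"
proof (rule eq_matI)
  fix i j assume "i < dim_row (mat a b (\<lambda>(i,j). \<psi> $ (i*b + j)) * adj (mat a b (\<lambda>(i,j). \<psi> $ (i*b + j))))"
    "j < dim_col (mat a b (\<lambda>(i,j). \<psi> $ (i*b + j)) * adj (mat a b (\<lambda>(i,j). \<psi> $ (i*b + j))))"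
  hence i: "i < a" and j: "j < a" by auto
  show "ptrace_mid a b 1 (outer (a*b) \<psi>) $$ (i,j) = (mat a b (\<lambda>(i,j). \<psi> $ (i*b + j)) * adj (mat a b (\<lambda>(i,j). \<psi> $ (i*b + j)))) $$ (i,j)"
    using i j pair_lt[OF i] pair_lt[OF j] by (auto simp: ptrace_mid_def outer_def scalar_prod_def lessThan_atLeast0 intro!: sum.cong)
qed (auto simp: ptrace_mid_def)

lemma pt_scale: assumes M: "M \<in> carrier_mat (a*b*c) (a*b*c)"
  shows "ptrace_mid a b c (k \<cdot>\<^sub>m M) = k \<cdot>\<^sub>m ptrace_mid a b c M"
proof (rule eq_matI)
  fix i j assume ij: "i < dim_row (k \<cdot>\<^sub>m ptrace_mid a b c M)" "j < dim_col (k \<cdot>\<^sub>m ptrace_mid a b c M)"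
  hence i: "i < a*c" and j: "j < a*c" by (auto simp: ptrace_mid_def)
  have r: "((i div c)*b + l)*c + i mod c < a*b*c" "((j div c)*b + l)*c + j mod c < a*b*c" if l: "l < b" for l
    using pair_lt[OF pair_lt[OF div_lt[OF i] l] mod_lt[OF i]] pair_lt[OF pair_lt[OF div_lt[OF j] l] mod_lt[OF j]] by auto
  show "ptrace_mid a b c (k \<cdot>\<^sub>m M) $$ (i,j) = (k \<cdot>\<^sub>m ptrace_mid a b c M) $$ (i,j)"
    using i j M r by (simp add: ptrace_mid_def sum_distrib_left)
qed (auto simp: ptrace_mid_def)

lemma pt_tr: assumes "X \<in> carrier_mat a a" shows "ptrace_mid 1 a 1 X = mat 1 1 (\<lambda>_. mtrace X)"
  using assms by (intro eq_matI) (auto simp: ptrace_mid_def mtrace_def)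

lemma kron_one: assumes "X \<in> carrier_mat 1 1" shows "kronI 1 b X = X $$ (0,0) \<cdot>\<^sub>m 1\<^sub>m b"
  using assms by (intro eq_matI) (auto simp: kronI_def)

lemma kron_scale: "kronI a b (k \<cdot>\<^sub>m X) = k \<cdot>\<^sub>m kronI a b X" if "X \<in> carrier_mat a a"
  using that by (intro eq_matI) (auto simp: kronI_def div_lt)

lemma psd_blk: assumes p: "\<And>x. x < n \<Longrightarrow> psd m (M x)" shows "psd (m*n) (blk m n M)"
proof -
  have h: "herm (m*n) (blk m n M)" using herm_blk p psd_herm by blast
  have Mc: "\<And>x. x < n \<Longrightarrow> M x \<in> carrier_mat m m" using p unfolding psd_def by auto
  have "0 \<le> Re (\<Sum>i<m*n. cnj (v $ i) * (blk m n M *\<^sub>v v) $ i)" if v: "v \<in> carrier_vec (m*n)" for v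
  proof -
    define cmp where "cmp x = vec m (\<lambda>k. v $ (k*n + x))" for x
    have "(\<Sum>i<m*n. cnj (v $ i) * (blk m n M *\<^sub>v v) $ i) = (\<Sum>k<m. \<Sum>x<n. cnj (v $ (k*n+x)) * (blk m n M *\<^sub>v v) $ (k*n+x))"
      by (rule sum_pair)
    also have "\<dots> = (\<Sum>k<m. \<Sum>x<n. cnj (cmp x $ k) * (M x *\<^sub>v cmp x) $ k)"
      using blk_mv[OF Mc v] by (intro sum.cong refl) (auto simp: cmp_def)
    also have "\<dots> = (\<Sum>x<n. \<Sum>k<m. cnj (cmp x $ k) * (M x *\<^sub>v cmp x) $ k)" by (rule sum.swap)
    finally have e: "Re (\<Sum>i<m*n. cnj (v $ i) * (blk m n M *\<^sub>v v) $ i) = (\<Sum>x<n. Re (\<Sum>k<m. cnj (cmp x $ k) * (M x *\<^sub>v cmp x) $ k))"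
      by (simp add: Re_sum)
    have "0 \<le> Re (\<Sum>k<m. cnj (cmp x $ k) * (M x *\<^sub>v cmp x) $ k)" if x: "x < n" for x
    proof -
      have "cmp x \<in> carrier_vec m" by (simp add: cmp_def)
      thus ?thesis using p[OF x] unfolding psd_def by blast
    qed
    thus ?thesis unfolding e by (intro sum_nonneg) auto
  qed
  thus ?thesis using h unfolding psd_def herm_def by auto
qed

lemma ftil_powr: "ftil (\<lambda>x. x powr a) c = c powr a" by (simp add: ftil_def)




lemma jensen_pow:
  fixes w y :: "'a \<Rightarrow> real" and r :: real
  assumes "finite S" "S \<noteq> {}" "\<And>i. i \<in> S \<Longrightarrow> 0 \<le> w i" "sum w S = 1"
    "\<And>i. i \<in> S \<Longrightarrow> 0 < y i" "r \<ge> 1"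
  shows "(\<Sum>i\<in>S. w i * y i) powr r \<le> (\<Sum>i\<in>S. w i * y i powr r)"
  using convex_on_sum[OF assms(1,2) powr_convex[OF assms(6)] assms(4), of y] assms(3,5) by auto

lemma pos_sum: fixes n :: nat assumes "n > 0" "\<And>x. x < n \<Longrightarrow> 0 \<le> p x" "(\<Sum>x<n. p x) = (1::real)"
  "\<And>x. x < n \<Longrightarrow> 0 < y x" shows "0 < (\<Sum>x<n. p x * y x)"
proof -
  obtain x where x: "x < n" "p x > 0"
  proof (rule ccontr)
    assume "\<not> thesis"
    hence "\<forall>x<n. p x \<le> 0" using that by (meson not_le)
    hence "(\<Sum>x<n. p x) \<le> 0" by (intro sum_nonpos) auto
    thus False using assms(3) by simp
  qed
  have "p x * y x \<le> (\<Sum>x<n. p x * y x)"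
    using x assms(2,4) by (intro member_le_sum) (simp_all add: less_imp_le)
  moreover have "p x * y x > 0" using x assms(4) by simp
  ultimately show ?thesis by linarith
qed

lemma final_ineq:
  fixes n :: nat
  assumes n: "n > 0" and p: "\<And>x. x < n \<Longrightarrow> 0 \<le> p x" and ps: "(\<Sum>x<n. p x) = (1::real)"
    and tau: "\<And>x. x < n \<Longrightarrow> 0 < \<tau> x" and a0: "0 < \<alpha>" and a2: "\<alpha> < 2" and a1: "\<alpha> \<noteq> 1"
    and beta: "\<beta> = (2 - \<alpha>) / \<alpha>"
  shows "1/2 * (\<alpha> / (\<alpha> - 1) * ln (\<Sum>x<n. p x * \<tau> x)) \<le> \<beta> / (1 - \<beta>) * ln (\<Sum>x<n. p x * \<tau> x powr (1 / \<beta>))"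
proof -
  define r where "r = 1 / \<beta>"
  have bpos: "\<beta> > 0" using beta a0 a2 by simp
  have r: "r = \<alpha> / (2 - \<alpha>)" using beta r_def a0 a2 by simp
  have rpos: "r > 0" using r a0 a2 by simp
  define A where "A = (\<Sum>x<n. p x * \<tau> x)"
  define B where "B = (\<Sum>x<n. p x * \<tau> x powr r)"
  have A: "A > 0" unfolding A_def by (rule pos_sum[OF n p ps tau])
  have tr: "0 < \<tau> x powr r" if "x < n" for x
  proof -
    have "\<tau> x > 0" using tau that .
    thus ?thesis by simp
  qed
  have B: "B > 0" unfolding B_def by (rule pos_sum[OF n p ps tr])
  have am1: "\<alpha> - 1 \<noteq> 0" using a1 by simp
  have omb: "1 - \<beta> = 2 * (\<alpha> - 1) / \<alpha>" using beta a0 by (simp add: field_simps)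
  have coef: "\<beta> / (1 - \<beta>) = 1/2 * ((2 - \<alpha>) / (\<alpha> - 1))"
    unfolding omb beta using a0 am1 by (simp add: field_simps)
  have coef2: "(2 - \<alpha>) / (\<alpha> - 1) * r = \<alpha> / (\<alpha> - 1)"
    using r a2 a1 by (simp add: field_simps)
  have main: "\<alpha> / (\<alpha> - 1) * ln A \<le> (2 - \<alpha>) / (\<alpha> - 1) * ln B"
  proof (cases "\<alpha> > 1")
    case True
    have r1: "r \<ge> 1" unfolding r using True a2 by (simp add: le_divide_eq)
    have "A powr r \<le> B" unfolding A_def B_def
      using jensen_pow[of "{..<n}" p \<tau> r] n p ps tau r1 by auto
    hence "ln (A powr r) \<le> ln B" using A B by (subst ln_le_cancel_iff) auto
    moreover have "ln (A powr r) = r * ln A" using A by (simp add: ln_powr)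
    ultimately have "r * ln A \<le> ln B" by simp
    moreover have "(2 - \<alpha>) / (\<alpha> - 1) > 0" using True a2 by simp
    ultimately have "(2 - \<alpha>) / (\<alpha> - 1) * (r * ln A) \<le> (2 - \<alpha>) / (\<alpha> - 1) * ln B"
      by (intro mult_left_mono) auto
    moreover have "(2 - \<alpha>) / (\<alpha> - 1) * (r * ln A) = \<alpha> / (\<alpha> - 1) * ln A"
      by (metis coef2 mult.assoc)
    ultimately show ?thesis by linarith
  next
    case False
    hence a1': "\<alpha> < 1" using a1 by simp
    have r1: "1 / r \<ge> 1" unfolding r using a1' a0 a2 by (simp add: le_divide_eq)
    have "B powr (1 / r) \<le> (\<Sum>x<n. p x * (\<tau> x powr r) powr (1 / r))" unfolding B_def
      by (rule jensen_pow) (use n p ps tr r1 in auto)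
    also have "\<dots> = A" unfolding A_def
    proof (intro sum.cong refl)
      fix x assume "x \<in> {..<n}"
      hence "\<tau> x > 0" using tau by simp
      thus "p x * (\<tau> x powr r) powr (1/r) = p x * \<tau> x" using rpos by (simp add: powr_powr)
    qed
    finally have "B powr (1/r) \<le> A" .
    hence "ln (B powr (1/r)) \<le> ln A" using A B by (subst ln_le_cancel_iff) auto
    moreover have "ln (B powr (1/r)) = (1/r) * ln B" using B by (simp add: ln_powr)
    ultimately have "(1/r) * ln B \<le> ln A" by simp
    moreover have "\<alpha> / (\<alpha> - 1) < 0" using a1' a0 by (simp add: divide_pos_neg)
    ultimately have "\<alpha> / (\<alpha> - 1) * ln A \<le> \<alpha> / (\<alpha> - 1) * ((1/r) * ln B)"
      by (intro mult_left_mono_neg) auto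
    also have "\<alpha> / (\<alpha> - 1) * ((1/r) * ln B) = (2 - \<alpha>) / (\<alpha> - 1) * ln B"
      unfolding r using a0 a2 am1 by (simp add: field_simps)
    finally show ?thesis .
  qed
  have "1/2 * (\<alpha> / (\<alpha> - 1) * ln A) \<le> 1/2 * ((2 - \<alpha>) / (\<alpha> - 1) * ln B)" using main by linarith
  also have "\<dots> = \<beta> / (1 - \<beta>) * ln B" using coef by simp
  finally show ?thesis unfolding A_def B_def r_def .
qed




lemma dm_lemma: assumes "r < (D::nat)" shows "(x*D + r) div D = x" "(x*D + r) mod D = r"
  using assms by auto

locale ens =
  fixes \<alpha> :: real and dA dB n :: nat and p :: "nat \<Rightarrow> real" and \<psi> :: "nat \<Rightarrow> complex vec"
  assumes a0: "0 < \<alpha>" and a2: "\<alpha> < 2" and a1: "\<alpha> \<noteq> 1" and dA: "0 < dA" and dB: "0 < dB" and n0: "0 < n"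
    and p0: "\<And>x. x < n \<Longrightarrow> 0 \<le> p x" and ps: "(\<Sum>x<n. p x) = 1"
    and psi: "\<And>x. x < n \<Longrightarrow> \<psi> x \<in> carrier_vec (dA*dB)"
    and nrm: "\<And>x. x < n \<Longrightarrow> (\<Sum>i<dA*dB. cmod (\<psi> x $ i) ^ 2) = 1"
begin

definition Psi where "Psi x = mat dA dB (\<lambda>(i,j). \<psi> x $ (i*dB + j))"
definition sg where "sg x = Psi x * adj (Psi x)"
definition P where "P x = outer (dA*dB) (\<psi> x)"
definition om where "om = blk (dA*dB) n (\<lambda>x. complex_of_real (p x) \<cdot>\<^sub>m P x)"
definition rAE where "rAE = blk dA n (\<lambda>x. complex_of_real (p x) \<cdot>\<^sub>m sg x)"
definition tau where "tau x = Re (mtrace (mat_pow dA (sg x) ((2-\<alpha>)/\<alpha>)))"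

lemma Psi_c[simp]: "Psi x \<in> carrier_mat dA dB" by (simp add: Psi_def)
lemma sg_c[simp]: "sg x \<in> carrier_mat dA dA" unfolding sg_def by (meson Psi_c adj_carrier mult_carrier_mat)
lemma sg_psd: "psd dA (sg x)" unfolding sg_def by (rule psd_XX[OF Psi_c])

lemma nrmc: assumes x: "x < n" shows "(\<Sum>i<dA*dB. \<psi> x $ i * cnj (\<psi> x $ i)) = 1"
  using arg_cong[OF nrm[OF x], of complex_of_real] by (simp add: of_real_sum mcs)
lemma sg_herm: "herm dA (sg x)" using psd_herm[OF sg_psd] .
lemma P_c[simp]: "P x \<in> carrier_mat (dA*dB) (dA*dB)" by (simp add: P_def outer_def)
lemma P_psd: "x < n \<Longrightarrow> psd (dA*dB) (P x)" unfolding P_def by (rule outer_psd[OF psi])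
lemma psg_psd: "x < n \<Longrightarrow> psd dA (complex_of_real (p x) \<cdot>\<^sub>m sg x)" using psd_scale[OF sg_psd p0] .
lemma pP_psd: "x < n \<Longrightarrow> psd (dA*dB) (complex_of_real (p x) \<cdot>\<^sub>m P x)" using psd_scale[OF P_psd p0] .

lemma sg_pt: "sg x = ptrace_mid dA dB 1 (P x)"
  unfolding sg_def P_def Psi_def using pt_outer2[of dA dB "\<psi> x"] by simp

lemma sg_tr: assumes x: "x < n" shows "mtrace (sg x) = 1"
proof -
  have "mtrace (sg x) = (\<Sum>a<dA. \<Sum>b<dB. \<psi> x $ (a*dB + b) * cnj (\<psi> x $ (a*dB + b)))"
    unfolding mtrace_def sg_def Psi_def by (simp add: scalar_prod_def lessThan_atLeast0)
  also have "\<dots> = (\<Sum>i<dA*dB. \<psi> x $ i * cnj (\<psi> x $ i))" by (rule sum_pair[symmetric])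
  finally show ?thesis using nrmc[OF x] by simp
qed

lemma L_rAE: "ptrace_mid dA dB n om = rAE"
proof -
  have "ptrace_mid dA dB n om = blk dA n (\<lambda>x. ptrace_mid dA dB 1 (complex_of_real (p x) \<cdot>\<^sub>m P x))"
    unfolding om_def by (rule pt1)
  also have "\<dots> = rAE" unfolding rAE_def
    by (rule blk_cong) (simp add: pt_scale sg_pt)
  finally show ?thesis .
qed

lemma L_rE: "ptrace_mid 1 (dA*dB) n om = blk 1 n (\<lambda>x. mat 1 1 (\<lambda>_. complex_of_real (p x)))"
proof -
  have "om = blk (1*(dA*dB)) n (\<lambda>x. complex_of_real (p x) \<cdot>\<^sub>m P x)" unfolding om_def by simp
  hence "ptrace_mid 1 (dA*dB) n om = blk 1 n (\<lambda>x. ptrace_mid 1 (dA*dB) 1 (complex_of_real (p x) \<cdot>\<^sub>m P x))"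
    using pt1[of 1 "dA*dB" n] by simp
  also have "\<dots> = blk 1 n (\<lambda>x. mat 1 1 (\<lambda>_. complex_of_real (p x)))"
  proof (rule blk_cong)
    fix x assume x: "x < n"
    have "ptrace_mid 1 (dA*dB) 1 (complex_of_real (p x) \<cdot>\<^sub>m P x) = complex_of_real (p x) \<cdot>\<^sub>m ptrace_mid 1 (dA*dB) 1 (P x)"
      using pt_scale[of "P x" 1 "dA*dB" 1] by simp
    also have "ptrace_mid 1 (dA*dB) 1 (P x) = mat 1 1 (\<lambda>_. mtrace (P x))" using pt_tr[of "P x" "dA*dB"] by simp
    also have "mtrace (P x) = 1"
    proof -
      have "mtrace (P x) = (\<Sum>i<dA*dB. \<psi> x $ i * cnj (\<psi> x $ i))" by (simp add: mtrace_def P_def outer_def)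
      thus ?thesis using nrmc[OF x] by simp
    qed
    finally show "ptrace_mid 1 (dA*dB) 1 (complex_of_real (p x) \<cdot>\<^sub>m P x) = mat 1 1 (\<lambda>_. complex_of_real (p x))"
      by (auto intro!: eq_matI)
  qed
  finally show ?thesis .
qed

lemma L_marg: "ptrace_mid (dA*dB) n 1 om = ens_avg n (dA*dB) p \<psi>"
proof (rule eq_matI)
  fix i j assume "i < dim_row (ens_avg n (dA*dB) p \<psi>)" "j < dim_col (ens_avg n (dA*dB) p \<psi>)"
  hence i: "i < dA*dB" and j: "j < dA*dB" by (auto simp: ens_avg_def)
  have "ptrace_mid (dA*dB) n 1 om $$ (i,j) = (\<Sum>k<n. om $$ (i*n + k, j*n + k))"
    using i j by (simp add: ptrace_mid_def)
  also have "\<dots> = (\<Sum>k<n. complex_of_real (p k) * (\<psi> k $ i) * cnj (\<psi> k $ j))"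
  proof (intro sum.cong refl)
    fix k assume k: "k \<in> {..<n}"
    have l: "i*n + k < dA*dB*n" "j*n + k < dA*dB*n" using pair_lt i j k by auto
    show "om $$ (i*n + k, j*n + k) = complex_of_real (p k) * (\<psi> k $ i) * cnj (\<psi> k $ j)"
      using l k i j by (simp add: om_def blk_index P_def outer_def)
  qed
  also have "\<dots> = ens_avg n (dA*dB) p \<psi> $$ (i,j)" using i j by (simp add: ens_avg_def)
  finally show "ptrace_mid (dA*dB) n 1 om $$ (i,j) = ens_avg n (dA*dB) p \<psi> $$ (i,j)" .
qed (auto simp: ptrace_mid_def ens_avg_def)

lemma L_dens: "density (dA*dB*n) om"
proof -
  have "psd (dA*dB*n) om" unfolding om_def by (rule psd_blk) (rule pP_psd)
  moreover have "mtrace om = 1"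
  proof -
    have "mtrace om = (\<Sum>x<n. mtrace (complex_of_real (p x) \<cdot>\<^sub>m P x))"
      unfolding om_def by (rule blk_trace) simp
    also have "\<dots> = (\<Sum>x<n. complex_of_real (p x))"
    proof (intro sum.cong refl)
      fix x assume x: "x \<in> {..<n}"
      have "mtrace (complex_of_real (p x) \<cdot>\<^sub>m P x) = complex_of_real (p x) * (\<Sum>i<dA*dB. \<psi> x $ i * cnj (\<psi> x $ i))"
        by (simp add: mtrace_def P_def outer_def sum_distrib_left mult.assoc)
      thus "mtrace (complex_of_real (p x) \<cdot>\<^sub>m P x) = complex_of_real (p x)" using nrmc x by simp
    qed
    also have "\<dots> = 1" using ps by (simp flip: of_real_sum)
    finally show ?thesis .
  qed
  ultimately show ?thesis unfolding density_def by simp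
qed

lemma L_om_pow: "mat_pow (dA*dB*n) om \<alpha> = blk (dA*dB) n (\<lambda>x. complex_of_real (p x powr \<alpha>) \<cdot>\<^sub>m P x)"
proof -
  have "mat_pow (dA*dB*n) om \<alpha> = blk (dA*dB) n (\<lambda>x. mat_fun (dA*dB) (\<lambda>x. x powr \<alpha>) (complex_of_real (p x) \<cdot>\<^sub>m P x))"
    unfolding mat_pow_def om_def by (rule blk_fun) (rule psd_herm[OF pP_psd])
  also have "\<dots> = blk (dA*dB) n (\<lambda>x. complex_of_real (p x powr \<alpha>) \<cdot>\<^sub>m P x)"
  proof (rule blk_cong)
    fix x assume x: "x < n"
    have "mat_fun (dA*dB) (\<lambda>x. x powr \<alpha>) (complex_of_real (p x) \<cdot>\<^sub>m P x) = mat_pow (dA*dB) (complex_of_real (p x) \<cdot>\<^sub>m P x) \<alpha>"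
      by (simp add: mat_pow_def)
    also have "\<dots> = complex_of_real (p x powr \<alpha>) \<cdot>\<^sub>m mat_pow (dA*dB) (P x) \<alpha>" using mp_scale[OF P_psd[OF x] p0[OF x]] .
    also have "mat_pow (dA*dB) (P x) \<alpha> = P x" unfolding P_def using rank1[OF psi[OF x] nrm[OF x]] .
    finally show "mat_fun (dA*dB) (\<lambda>x. x powr \<alpha>) (complex_of_real (p x) \<cdot>\<^sub>m P x) = complex_of_real (p x powr \<alpha>) \<cdot>\<^sub>m P x" .
  qed
  finally show ?thesis .
qed

lemma L_rAE_pow: "mat_pow (dA*n) rAE a = blk dA n (\<lambda>x. complex_of_real (p x powr a) \<cdot>\<^sub>m mat_pow dA (sg x) a)"
proof -
  have "mat_pow (dA*n) rAE a = blk dA n (\<lambda>x. mat_fun dA (\<lambda>x. x powr a) (complex_of_real (p x) \<cdot>\<^sub>m sg x))"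
    unfolding mat_pow_def rAE_def by (rule blk_fun) (rule psd_herm[OF psg_psd])
  also have "\<dots> = blk dA n (\<lambda>x. complex_of_real (p x powr a) \<cdot>\<^sub>m mat_pow dA (sg x) a)"
  proof (rule blk_cong)
    fix x assume x: "x < n"
    show "mat_fun dA (\<lambda>x. x powr a) (complex_of_real (p x) \<cdot>\<^sub>m sg x) = complex_of_real (p x powr a) \<cdot>\<^sub>m mat_pow dA (sg x) a"
      using mp_scale[OF sg_psd p0[OF x]] by (simp add: mat_pow_def)
  qed
  finally show ?thesis .
qed

lemma L_swap: "swap_sys n dA (ptrace_mid (n*dA) dB 1 (cq_state n (dA*dB) p \<psi>)) = rAE"
proof (rule eq_matI)
  fix i j assume "i < dim_row rAE" "j < dim_col rAE"
  hence i: "i < dA*n" and j: "j < dA*n" by (auto simp: rAE_def)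
  have mi: "i mod n < n" "j mod n < n" using mod_lt i j by auto
  have di: "i div n < dA" "j div n < dA" using div_lt i j by auto
  have r: "(i mod n)*dA + i div n < n*dA" "(j mod n)*dA + j div n < n*dA" using pair_lt mi di by auto
  have "swap_sys n dA (ptrace_mid (n*dA) dB 1 (cq_state n (dA*dB) p \<psi>)) $$ (i,j)
     = (\<Sum>k<dB. cq_state n (dA*dB) p \<psi> $$ (((i mod n)*dA + i div n)*dB + k, ((j mod n)*dA + j div n)*dB + k))"
    using i j r by (simp add: swap_sys_def ptrace_mid_def mult.commute)
  also have "\<dots> = (\<Sum>k<dB. if i mod n = j mod n then complex_of_real (p (i mod n)) * (\<psi> (i mod n) $ ((i div n)*dB + k)) * cnj (\<psi> (j mod n) $ ((j div n)*dB + k)) else 0)"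
  proof (intro sum.cong refl)
    fix k assume k: "k \<in> {..<dB}"
    have e: "((i mod n)*dA + i div n)*dB + k = (i mod n)*(dA*dB) + ((i div n)*dB + k)"
      "((j mod n)*dA + j div n)*dB + k = (j mod n)*(dA*dB) + ((j div n)*dB + k)" by (simp_all add: algebra_simps)
    have l: "(i div n)*dB + k < dA*dB" "(j div n)*dB + k < dA*dB" using pair_lt di k by auto
    have l2: "(i mod n)*(dA*dB) + ((i div n)*dB + k) < n*(dA*dB)" "(j mod n)*(dA*dB) + ((j div n)*dB + k) < n*(dA*dB)"
      using pair_lt[OF mi(1) l(1)] pair_lt[OF mi(2) l(2)] by auto
    show "cq_state n (dA*dB) p \<psi> $$ (((i mod n)*dA + i div n)*dB + k, ((j mod n)*dA + j div n)*dB + k) =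
      (if i mod n = j mod n then complex_of_real (p (i mod n)) * (\<psi> (i mod n) $ ((i div n)*dB + k)) * cnj (\<psi> (j mod n) $ ((j div n)*dB + k)) else 0)"
      unfolding e using l l2 by (simp add: cq_state_def dm_lemma)
  qed
  also have "\<dots> = rAE $$ (i,j)"
    using i j mi di by (auto simp: rAE_def blk_index sg_def Psi_def scalar_prod_def lessThan_atLeast0 sum_distrib_left mult.assoc)
  finally show "swap_sys n dA (ptrace_mid (n*dA) dB 1 (cq_state n (dA*dB) p \<psi>)) $$ (i,j) = rAE $$ (i,j)" .
qed (auto simp: rAE_def swap_sys_def ptrace_mid_def)

lemma tau_pos: assumes x: "x < n" shows "tau x > 0"
proof -
  obtain d where d1: "mtrace (sg x) = complex_of_real (\<Sum>i<dA. d i)"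
    and d2: "mtrace (mat_fun dA (\<lambda>t. t powr ((2-\<alpha>)/\<alpha>)) (sg x)) = complex_of_real (\<Sum>i<dA. ftil (\<lambda>t. t powr ((2-\<alpha>)/\<alpha>)) (d i))"
    and d3: "\<forall>i<dA. d i \<ge> 0"
    using trace_spec[OF sg_herm, of x "\<lambda>t. t powr ((2-\<alpha>)/\<alpha>)"] sg_psd by blast
  have "complex_of_real (\<Sum>i<dA. d i) = 1" using d1 sg_tr[OF x] by simp
  hence ds: "(\<Sum>i<dA. d i) = 1" using of_real_eq_1_iff by blast
  obtain i where i: "i < dA" "d i > 0"
  proof (rule ccontr)
    assume "\<not> thesis"
    hence "\<forall>i<dA. d i \<le> 0" using that by (meson not_le)
    hence "(\<Sum>i<dA. d i) \<le> 0" by (intro sum_nonpos) auto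
    thus False using ds by simp
  qed
  have "tau x = (\<Sum>i<dA. ftil (\<lambda>t. t powr ((2-\<alpha>)/\<alpha>)) (d i))"
    unfolding tau_def mat_pow_def d2 by simp
  also have "\<dots> \<ge> ftil (\<lambda>t. t powr ((2-\<alpha>)/\<alpha>)) (d i)"
    using i d3 by (intro member_le_sum) (auto simp: ftil_def)
  finally have "ftil (\<lambda>t. t powr ((2-\<alpha>)/\<alpha>)) (d i) \<le> tau x" .
  moreover have "0 < ftil (\<lambda>t. t powr ((2-\<alpha>)/\<alpha>)) (d i)" using i by (simp add: ftil_def)
  ultimately show ?thesis by linarith
qed

end




lemma smult_smult_mat: "a \<cdot>\<^sub>m (b \<cdot>\<^sub>m A) = (a * b) \<cdot>\<^sub>m (A :: complex mat)"
  by (intro eq_matI) auto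

lemma smult3: assumes A: "A \<in> carrier_mat m m" and B: "B \<in> carrier_mat m m" and C: "C \<in> carrier_mat m m"
  shows "(a \<cdot>\<^sub>m A) * (b \<cdot>\<^sub>m B) * (c \<cdot>\<^sub>m C) = (a * b * c) \<cdot>\<^sub>m (A * B * (C :: complex mat))"
proof -
  have "(a \<cdot>\<^sub>m A) * (b \<cdot>\<^sub>m B) = (a * b) \<cdot>\<^sub>m (A * B)"
    using mult_smult_assoc_mat[OF A smult_carrier_mat[OF B]] mult_smult_distrib[OF A B] smult_smult_mat by simp
  moreover have "((a * b) \<cdot>\<^sub>m (A * B)) * (c \<cdot>\<^sub>m C) = (a * b * c) \<cdot>\<^sub>m (A * B * C)"
    using mult_smult_assoc_mat[OF mult_carrier_mat[OF A B] smult_carrier_mat[OF C]]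
      mult_smult_distrib[OF mult_carrier_mat[OF A B] C] smult_smult_mat by simp
  ultimately show ?thesis by simp
qed

lemma mtrace_smult: "M \<in> carrier_mat k k \<Longrightarrow> mtrace (c \<cdot>\<^sub>m M) = c * mtrace M"
  by (simp add: mtrace_def sum_distrib_left)

lemma sc1: assumes "0 \<le> (q::real)"
  shows "q powr ((\<alpha>-1)/2) * (q powr ((1-\<alpha>)/2) * q powr \<alpha> * q powr ((1-\<alpha>)/2)) * q powr ((\<alpha>-1)/2) = q powr \<alpha>"
proof (cases "q = 0")
  case False
  hence q: "q > 0" using assms by simp
  have "q powr ((\<alpha>-1)/2) * (q powr ((1-\<alpha>)/2) * q powr \<alpha> * q powr ((1-\<alpha>)/2)) * q powr ((\<alpha>-1)/2)
      = q powr ((\<alpha>-1)/2 + ((1-\<alpha>)/2 + \<alpha> + (1-\<alpha>)/2) + (\<alpha>-1)/2)" by (simp only: powr_add)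
  also have "(\<alpha>-1)/2 + ((1-\<alpha>)/2 + \<alpha> + (1-\<alpha>)/2) + (\<alpha>-1)/2 = \<alpha>" by (simp add: field_simps)
  finally show ?thesis .
qed simp

lemma sc2: assumes "0 \<le> (q::real)" "a \<noteq> 0" shows "(q powr a) powr (1/a) = q"
  using assms by (cases "q = 0") (auto simp: powr_powr)

lemma kron_one': "kronI (Suc 0) b (mat (Suc 0) (Suc 0) (\<lambda>_. c)) = c \<cdot>\<^sub>m 1\<^sub>m b"
  by (intro eq_matI) (auto simp: kronI_def)

lemma herm11: "herm 1 (mat 1 1 (\<lambda>_. complex_of_real c))"
  unfolding herm_def by (auto intro!: eq_matI)

lemma pow11_blk: "mat_pow n (blk 1 n (\<lambda>x. mat 1 1 (\<lambda>_. complex_of_real (c x)))) a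
   = blk 1 n (\<lambda>x. mat 1 1 (\<lambda>_. complex_of_real (c x powr a)))"
proof -
  have "mat_pow (1*n) (blk 1 n (\<lambda>x. mat 1 1 (\<lambda>_. complex_of_real (c x)))) a
     = blk 1 n (\<lambda>x. mat_fun 1 (\<lambda>x. x powr a) (mat 1 1 (\<lambda>_. complex_of_real (c x))))"
    unfolding mat_pow_def by (rule blk_fun) (rule herm11)
  also have "\<dots> = blk 1 n (\<lambda>x. mat 1 1 (\<lambda>_. complex_of_real (c x powr a)))"
  proof (rule blk_cong)
    fix x show "mat_fun 1 (\<lambda>x. x powr a) (mat 1 1 (\<lambda>_. complex_of_real (c x))) = mat 1 1 (\<lambda>_. complex_of_real (c x powr a))"
      using one1[of "c x" a] by (simp only: mat_pow_def ftil_powr)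
  qed
  finally show ?thesis by simp
qed

context ens
begin

definition K where "K x = kronI dA dB (mat_pow dA (sg x) ((1-\<alpha>)/2))"
definition phi where "phi x = K x *\<^sub>v \<psi> x"
definition Z where "Z x = mat dA dB (\<lambda>(i,j). cnj (phi x $ (i*dB + j)))"

lemma Ss_herm: "herm dA (mat_pow dA (sg x) a)" unfolding mat_pow_def by (rule mf_herm[OF sg_herm])
lemma Ss_c[simp]: "mat_pow dA (sg x) a \<in> carrier_mat dA dA" using Ss_herm unfolding herm_def by auto
lemma K_herm: "herm (dA*dB) (K x)" unfolding K_def by (rule herm_kron[OF Ss_herm])
lemma K_c[simp]: "K x \<in> carrier_mat (dA*dB) (dA*dB)" by (simp add: K_def)
lemma phi_c: "x < n \<Longrightarrow> phi x \<in> carrier_vec (dA*dB)" unfolding phi_def using mult_mat_vec_carrier[OF K_c psi] by simp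
lemma Z_c[simp]: "Z x \<in> carrier_mat dA dB" by (simp add: Z_def)
lemma G_psd: "psd dB (adj (Z x) * Z x)" using psd_XX[OF adj_carrier[OF Z_c]] by simp

lemma G_tr: assumes x: "x < n"
  shows "Re (mtrace (mat_pow dB (adj (Z x) * Z x) (1/\<alpha>))) = tau x"
proof -
  define Phi where "Phi = mat dA dB (\<lambda>(i,j). phi x $ (i*dB + j))"
  define Ss where "Ss = mat_pow dA (sg x) ((1-\<alpha>)/2)"
  have Ssc: "Ss \<in> carrier_mat dA dA" by (simp add: Ss_def)
  have hSs: "adj Ss = Ss" using Ss_herm unfolding Ss_def herm_def by auto
  have Phi: "Phi = Ss * Psi x" unfolding Phi_def phi_def K_def Ss_def Psi_def
    by (rule kron_Phi[OF Ss_c psi[OF x]])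
  have PP: "Phi * adj Phi = mat_pow dA (sg x) (2 - \<alpha>)"
  proof -
    have "Phi * adj Phi = Ss * Psi x * (adj (Psi x) * Ss)"
      unfolding Phi using adj_mult[OF Ssc Psi_c] hSs by simp
    also have "\<dots> = Ss * (Psi x * (adj (Psi x) * Ss))"
      using assoc_mult_mat[OF Ssc Psi_c mult_carrier_mat[OF adj_carrier[OF Psi_c] Ssc]] .
    also have "Psi x * (adj (Psi x) * Ss) = (Psi x * adj (Psi x)) * Ss"
      using assoc_mult_mat[OF Psi_c adj_carrier[OF Psi_c] Ssc] by simp
    also have "Ss * \<dots> = Ss * sg x * Ss" unfolding sg_def
      using assoc_mult_mat[OF Ssc mult_carrier_mat[OF Psi_c adj_carrier[OF Psi_c]] Ssc] by simp
    also have "\<dots> = mat_pow dA (sg x) (2 * ((1-\<alpha>)/2) + 1)" unfolding Ss_def by (rule pow_sandwich[OF sg_psd])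
    also have "2 * ((1-\<alpha>)/2) + 1 = 2 - \<alpha>" by simp
    finally show ?thesis .
  qed
  have hPP: "herm dA (Phi * adj Phi)" unfolding PP mat_pow_def by (rule mf_herm[OF sg_herm])
  have "mtrace (mat_pow dB (adj (Z x) * Z x) (1/\<alpha>)) = mtrace (mat_pow dA (Z x * adj (Z x)) (1/\<alpha>))"
    unfolding mat_pow_def by (rule mf_YY[OF Z_c])
  also have "Z x * adj (Z x) = cm (Phi * adj Phi)" unfolding Z_def Phi_def by (rule ZZ_cm)
  also have "mat_pow dA (cm (Phi * adj Phi)) (1/\<alpha>) = cm (mat_pow dA (Phi * adj Phi) (1/\<alpha>))"
    unfolding mat_pow_def by (rule mf_conj[OF hPP])
  also have "mtrace \<dots> = cnj (mtrace (mat_pow dA (Phi * adj Phi) (1/\<alpha>)))"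
    by (rule mtrace_cm[of _ dA]) (simp add: mat_pow_def mf_carrier[OF hPP])
  also have "mat_pow dA (Phi * adj Phi) (1/\<alpha>) = mat_pow dA (sg x) ((2-\<alpha>) * (1/\<alpha>))"
    unfolding PP by (rule pow_comp[OF sg_psd])
  also have "(2-\<alpha>) * (1/\<alpha>) = (2-\<alpha>)/\<alpha>" by simp
  finally show ?thesis unfolding tau_def by simp
qed

lemma L_cmi: "renyi_cmi \<alpha> dA dB n om = \<alpha>/(\<alpha>-1) * ln (\<Sum>x<n. p x * tau x)"
proof -
  define s where "s = (1-\<alpha>)/2"
  define t where "t = (\<alpha>-1)/2"
  have S: "mat_pow (dA*n) (ptrace_mid dA dB n om) s = blk dA n (\<lambda>x. complex_of_real (p x powr s) \<cdot>\<^sub>m mat_pow dA (sg x) s)"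
    unfolding L_rAE by (rule L_rAE_pow)
  have idS: "id_mid dA dB n (mat_pow (dA*n) (ptrace_mid dA dB n om) s) = blk (dA*dB) n (\<lambda>x. complex_of_real (p x powr s) \<cdot>\<^sub>m K x)"
    unfolding S pt_id by (rule blk_cong) (simp add: kron_scale K_def s_def)
  have Y: "id_mid dA dB n (mat_pow (dA*n) (ptrace_mid dA dB n om) s) * mat_pow (dA*dB*n) om \<alpha> * id_mid dA dB n (mat_pow (dA*n) (ptrace_mid dA dB n om) s)
     = blk (dA*dB) n (\<lambda>x. complex_of_real (p x powr s * p x powr \<alpha> * p x powr s) \<cdot>\<^sub>m outer (dA*dB) (phi x))"
  proof -
    have "blk (dA*dB) n (\<lambda>x. complex_of_real (p x powr s) \<cdot>\<^sub>m K x) * blk (dA*dB) n (\<lambda>x. complex_of_real (p x powr \<alpha>) \<cdot>\<^sub>m P x)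
        * blk (dA*dB) n (\<lambda>x. complex_of_real (p x powr s) \<cdot>\<^sub>m K x)
      = blk (dA*dB) n (\<lambda>x. (complex_of_real (p x powr s) \<cdot>\<^sub>m K x) * (complex_of_real (p x powr \<alpha>) \<cdot>\<^sub>m P x) * (complex_of_real (p x powr s) \<cdot>\<^sub>m K x))"
    proof -
      have c1: "\<And>x. complex_of_real (p x powr s) \<cdot>\<^sub>m K x \<in> carrier_mat (dA*dB) (dA*dB)" by simp
      have c2: "\<And>x. complex_of_real (p x powr \<alpha>) \<cdot>\<^sub>m P x \<in> carrier_mat (dA*dB) (dA*dB)" by simp
      have c3: "\<And>x. (complex_of_real (p x powr s) \<cdot>\<^sub>m K x) * (complex_of_real (p x powr \<alpha>) \<cdot>\<^sub>m P x) \<in> carrier_mat (dA*dB) (dA*dB)"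
        using mult_carrier_mat[OF c1 c2] .
      show ?thesis using blk_mult[OF c1 c2, of n] blk_mult[OF c3 c1, of n] by simp
    qed
    also have "\<dots> = blk (dA*dB) n (\<lambda>x. complex_of_real (p x powr s * p x powr \<alpha> * p x powr s) \<cdot>\<^sub>m outer (dA*dB) (phi x))"
    proof (rule blk_cong)
      fix x assume x: "x < n"
      show "(complex_of_real (p x powr s) \<cdot>\<^sub>m K x) * (complex_of_real (p x powr \<alpha>) \<cdot>\<^sub>m P x) * (complex_of_real (p x powr s) \<cdot>\<^sub>m K x)
          = complex_of_real (p x powr s * p x powr \<alpha> * p x powr s) \<cdot>\<^sub>m outer (dA*dB) (phi x)"
        using smult3[OF K_c P_c K_c] sandwich_outer[OF K_herm psi[OF x]] unfolding P_def phi_def by simp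
    qed
    finally show ?thesis unfolding idS L_om_pow .
  qed
  have T: "ptrace_mid 1 dA (dB*n) (id_mid dA dB n (mat_pow (dA*n) (ptrace_mid dA dB n om) s) * mat_pow (dA*dB*n) om \<alpha> * id_mid dA dB n (mat_pow (dA*n) (ptrace_mid dA dB n om) s))
     = blk dB n (\<lambda>x. complex_of_real (p x powr s * p x powr \<alpha> * p x powr s) \<cdot>\<^sub>m (adj (Z x) * Z x))"
    unfolding Y pt2
  proof (rule blk_cong)
    fix x assume x: "x < n"
    show "ptrace_mid 1 dA dB (complex_of_real (p x powr s * p x powr \<alpha> * p x powr s) \<cdot>\<^sub>m outer (dA*dB) (phi x))
       = complex_of_real (p x powr s * p x powr \<alpha> * p x powr s) \<cdot>\<^sub>m (adj (Z x) * Z x)"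
      using pt_scale[of "outer (dA*dB) (phi x)" 1 dA dB] pt_outer[OF phi_c[OF x]] unfolding Z_def by (simp add: outer_def)
  qed
  have R0: "mat_pow n (ptrace_mid 1 (dA*dB) n om) t = blk 1 n (\<lambda>x. mat 1 1 (\<lambda>_. complex_of_real (p x powr t)))"
    unfolding L_rE by (rule pow11_blk)
  have R: "id_mid 1 dB n (mat_pow n (ptrace_mid 1 (dA*dB) n om) t) = blk dB n (\<lambda>x. complex_of_real (p x powr t) \<cdot>\<^sub>m 1\<^sub>m dB)"
    unfolding R0 using pt_id[of 1 dB n] by (simp add: kron_one')
  have Q: "id_mid 1 dB n (mat_pow n (ptrace_mid 1 (dA*dB) n om) t) * ptrace_mid 1 dA (dB*n) (id_mid dA dB n (mat_pow (dA*n) (ptrace_mid dA dB n om) s) * mat_pow (dA*dB*n) om \<alpha> * id_mid dA dB n (mat_pow (dA*n) (ptrace_mid dA dB n om) s)) * id_mid 1 dB n (mat_pow n (ptrace_mid 1 (dA*dB) n om) t)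
     = blk dB n (\<lambda>x. complex_of_real (p x powr \<alpha>) \<cdot>\<^sub>m (adj (Z x) * Z x))"
  proof -
    have "blk dB n (\<lambda>x. complex_of_real (p x powr t) \<cdot>\<^sub>m 1\<^sub>m dB) * blk dB n (\<lambda>x. complex_of_real (p x powr s * p x powr \<alpha> * p x powr s) \<cdot>\<^sub>m (adj (Z x) * Z x)) * blk dB n (\<lambda>x. complex_of_real (p x powr t) \<cdot>\<^sub>m 1\<^sub>m dB)
      = blk dB n (\<lambda>x. (complex_of_real (p x powr t) \<cdot>\<^sub>m 1\<^sub>m dB) * (complex_of_real (p x powr s * p x powr \<alpha> * p x powr s) \<cdot>\<^sub>m (adj (Z x) * Z x)) * (complex_of_real (p x powr t) \<cdot>\<^sub>m 1\<^sub>m dB))"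
    proof -
      have G: "\<And>x. adj (Z x) * Z x \<in> carrier_mat dB dB" using mult_carrier_mat[OF adj_carrier[OF Z_c] Z_c] .
      have c1: "\<And>x. complex_of_real (p x powr t) \<cdot>\<^sub>m 1\<^sub>m dB \<in> carrier_mat dB dB" by simp
      have c2: "\<And>x. complex_of_real (p x powr s * p x powr \<alpha> * p x powr s) \<cdot>\<^sub>m (adj (Z x) * Z x) \<in> carrier_mat dB dB"
        using G by simp
      have c3: "\<And>x. (complex_of_real (p x powr t) \<cdot>\<^sub>m 1\<^sub>m dB) * (complex_of_real (p x powr s * p x powr \<alpha> * p x powr s) \<cdot>\<^sub>m (adj (Z x) * Z x)) \<in> carrier_mat dB dB"
        using mult_carrier_mat[OF c1 c2] .
      show ?thesis using blk_mult[OF c1 c2, of n] blk_mult[OF c3 c1, of n] by simp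
    qed
    also have "\<dots> = blk dB n (\<lambda>x. complex_of_real (p x powr \<alpha>) \<cdot>\<^sub>m (adj (Z x) * Z x))"
    proof (rule blk_cong)
      fix x assume x: "x < n"
      have G: "adj (Z x) * Z x \<in> carrier_mat dB dB" using mult_carrier_mat[OF adj_carrier[OF Z_c] Z_c] .
      show "(complex_of_real (p x powr t) \<cdot>\<^sub>m 1\<^sub>m dB) * (complex_of_real (p x powr s * p x powr \<alpha> * p x powr s) \<cdot>\<^sub>m (adj (Z x) * Z x)) * (complex_of_real (p x powr t) \<cdot>\<^sub>m 1\<^sub>m dB)
         = complex_of_real (p x powr \<alpha>) \<cdot>\<^sub>m (adj (Z x) * Z x)"
      proof -
        have "(complex_of_real (p x powr t) \<cdot>\<^sub>m 1\<^sub>m dB) * (complex_of_real (p x powr s * p x powr \<alpha> * p x powr s) \<cdot>\<^sub>m (adj (Z x) * Z x)) * (complex_of_real (p x powr t) \<cdot>\<^sub>m 1\<^sub>m dB)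
          = (complex_of_real (p x powr t) * complex_of_real (p x powr s * p x powr \<alpha> * p x powr s) * complex_of_real (p x powr t)) \<cdot>\<^sub>m (1\<^sub>m dB * (adj (Z x) * Z x) * 1\<^sub>m dB)"
          by (rule smult3[OF one_carrier_mat G one_carrier_mat])
        also have "complex_of_real (p x powr t) * complex_of_real (p x powr s * p x powr \<alpha> * p x powr s) * complex_of_real (p x powr t)
            = complex_of_real (p x powr t * (p x powr s * p x powr \<alpha> * p x powr s) * p x powr t)" by simp
        also have "p x powr t * (p x powr s * p x powr \<alpha> * p x powr s) * p x powr t = p x powr \<alpha>"
          unfolding s_def t_def by (rule sc1[OF p0[OF x]])
        also have "1\<^sub>m dB * (adj (Z x) * Z x) * 1\<^sub>m dB = adj (Z x) * Z x" using left_mult_one_mat[OF G] right_mult_one_mat[OF G] by simp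
        finally show ?thesis .
      qed
    qed
    finally show ?thesis unfolding R T .
  qed
  have QP: "mat_pow (dB*n) (blk dB n (\<lambda>x. complex_of_real (p x powr \<alpha>) \<cdot>\<^sub>m (adj (Z x) * Z x))) (1/\<alpha>)
      = blk dB n (\<lambda>x. complex_of_real (p x) \<cdot>\<^sub>m mat_pow dB (adj (Z x) * Z x) (1/\<alpha>))"
  proof -
    have "mat_pow (dB*n) (blk dB n (\<lambda>x. complex_of_real (p x powr \<alpha>) \<cdot>\<^sub>m (adj (Z x) * Z x))) (1/\<alpha>)
       = blk dB n (\<lambda>x. mat_fun dB (\<lambda>x. x powr (1/\<alpha>)) (complex_of_real (p x powr \<alpha>) \<cdot>\<^sub>m (adj (Z x) * Z x)))"
      unfolding mat_pow_def by (rule blk_fun) (rule psd_herm[OF psd_scale[OF G_psd]], simp)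
    also have "\<dots> = blk dB n (\<lambda>x. complex_of_real (p x) \<cdot>\<^sub>m mat_pow dB (adj (Z x) * Z x) (1/\<alpha>))"
    proof (rule blk_cong)
      fix x assume x: "x < n"
      show "mat_fun dB (\<lambda>x. x powr (1/\<alpha>)) (complex_of_real (p x powr \<alpha>) \<cdot>\<^sub>m (adj (Z x) * Z x)) = complex_of_real (p x) \<cdot>\<^sub>m mat_pow dB (adj (Z x) * Z x) (1/\<alpha>)"
        using mp_scale[OF G_psd[of x], of "p x powr \<alpha>" "1/\<alpha>"] sc2[OF p0[OF x]] a0 by (simp add: mat_pow_def)
    qed
    finally show ?thesis .
  qed
  have tr: "Re (mtrace (blk dB n (\<lambda>x. complex_of_real (p x) \<cdot>\<^sub>m mat_pow dB (adj (Z x) * Z x) (1/\<alpha>)))) = (\<Sum>x<n. p x * tau x)"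
  proof -
    have Gc: "mat_pow dB (adj (Z x) * Z x) (1/\<alpha>) \<in> carrier_mat dB dB" for x
      unfolding mat_pow_def using mf_carrier[OF psd_herm[OF G_psd]] .
    have "mtrace (blk dB n (\<lambda>x. complex_of_real (p x) \<cdot>\<^sub>m mat_pow dB (adj (Z x) * Z x) (1/\<alpha>)))
       = (\<Sum>x<n. complex_of_real (p x) * mtrace (mat_pow dB (adj (Z x) * Z x) (1/\<alpha>)))"
      using blk_trace[of n "\<lambda>x. complex_of_real (p x) \<cdot>\<^sub>m mat_pow dB (adj (Z x) * Z x) (1/\<alpha>)" dB] Gc
      by (simp add: mtrace_smult[OF Gc])
    hence "Re (mtrace (blk dB n (\<lambda>x. complex_of_real (p x) \<cdot>\<^sub>m mat_pow dB (adj (Z x) * Z x) (1/\<alpha>))))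
       = (\<Sum>x<n. p x * Re (mtrace (mat_pow dB (adj (Z x) * Z x) (1/\<alpha>))))" by (simp add: Re_sum)
    also have "\<dots> = (\<Sum>x<n. p x * tau x)" using G_tr by simp
    finally show ?thesis .
  qed
  show ?thesis unfolding renyi_cmi_def Let_def s_def[symmetric] t_def[symmetric] Q QP tr ..
qed

lemma L_H: "renyi_cond_ent ((2-\<alpha>)/\<alpha>) dA n (swap_sys n dA (ptrace_mid (n*dA) dB 1 (cq_state n (dA*dB) p \<psi>)))
   = ((2-\<alpha>)/\<alpha>) / (1 - (2-\<alpha>)/\<alpha>) * ln (\<Sum>x<n. p x * tau x powr (1 / ((2-\<alpha>)/\<alpha>)))"
proof -
  define b where "b = (2-\<alpha>)/\<alpha>"
  have bpos: "b > 0" using a0 a2 b_def by simp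
  have Mc: "\<And>x. complex_of_real (p x powr b) \<cdot>\<^sub>m mat_pow dA (sg x) b \<in> carrier_mat dA dA" by simp
  have pt: "ptrace_mid 1 dA n (mat_pow (dA*n) rAE b) = blk 1 n (\<lambda>x. mat 1 1 (\<lambda>_. complex_of_real (p x powr b * tau x)))"
  proof -
    have "ptrace_mid 1 dA n (mat_pow (dA*n) rAE b) = ptrace_mid 1 dA (1*n) (blk (dA*1) n (\<lambda>x. complex_of_real (p x powr b) \<cdot>\<^sub>m mat_pow dA (sg x) b))"
      unfolding L_rAE_pow by simp
    also have "\<dots> = blk 1 n (\<lambda>x. ptrace_mid 1 dA 1 (complex_of_real (p x powr b) \<cdot>\<^sub>m mat_pow dA (sg x) b))" by (rule pt2)
    also have "\<dots> = blk 1 n (\<lambda>x. mat 1 1 (\<lambda>_. complex_of_real (p x powr b * tau x)))"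
    proof (rule blk_cong)
      fix x assume x: "x < n"
      have h: "herm dA (mat_pow dA (sg x) b)" by (rule Ss_herm)
      have "mtrace (mat_pow dA (sg x) b) = complex_of_real (tau x)"
        using herm_trace_real[OF h] unfolding tau_def b_def by simp
      thus "ptrace_mid 1 dA 1 (complex_of_real (p x powr b) \<cdot>\<^sub>m mat_pow dA (sg x) b) = mat 1 1 (\<lambda>_. complex_of_real (p x powr b * tau x))"
        using pt_tr[OF Mc[of x]] by (simp add: mtrace_smult[OF Ss_c])
    qed
    finally show ?thesis .
  qed
  have tr: "Re (mtrace (blk 1 n (\<lambda>x. mat 1 1 (\<lambda>_. complex_of_real ((p x powr b * tau x) powr (1/b)))))) = (\<Sum>x<n. p x * tau x powr (1/b))"
  proof -
    have "mtrace (blk 1 n (\<lambda>x. mat 1 1 (\<lambda>_. complex_of_real ((p x powr b * tau x) powr (1/b)))))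
       = (\<Sum>x<n. mtrace (mat 1 1 (\<lambda>_. complex_of_real ((p x powr b * tau x) powr (1/b)))))"
      by (rule blk_trace) simp
    also have "\<dots> = (\<Sum>x<n. complex_of_real (p x * tau x powr (1/b)))"
    proof (intro sum.cong refl)
      fix x assume x: "x \<in> {..<n}"
      have "(p x powr b * tau x) powr (1/b) = (p x powr b) powr (1/b) * tau x powr (1/b)"
        using p0[of x] x tau_pos[of x] by (simp add: powr_mult)
      also have "(p x powr b) powr (1/b) = p x" using sc2[OF p0, of x b] x bpos by simp
      finally show "mtrace (mat 1 1 (\<lambda>_. complex_of_real ((p x powr b * tau x) powr (1/b)))) = complex_of_real (p x * tau x powr (1/b))"
        by (simp add: mtrace_def)
    qed
    finally show ?thesis by (simp add: Re_sum)
  qed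
  show ?thesis unfolding renyi_cond_ent_def L_swap b_def[symmetric] pt pow11_blk tr ..
qed

end




theorem proposition6:
  fixes \<alpha> :: real and dA dB :: nat and \<rho> :: "complex mat"
  assumes "0 < \<alpha>" and "\<alpha> < 2" and "\<alpha> \<noteq> 1"
    and "0 < dA" and "0 < dB"
    and "density (dA*dB) \<rho>"
  shows "renyi_eof ((2-\<alpha>)/\<alpha>) dA dB \<rho> \<ge> renyi_sq \<alpha> dA dB \<rho>"
  unfolding renyi_eof_def
proof (rule Inf_greatest)
  fix y assume "y \<in> {ereal (renyi_cond_ent ((2-\<alpha>)/\<alpha>) dA n
        (swap_sys n dA (ptrace_mid (n*dA) dB 1 (cq_state n (dA*dB) p \<psi>)))) | n p \<psi>.
      0 < n \<and> (\<forall>x<n. 0 \<le> p x) \<and> (\<Sum>x<n. p x) = 1 \<and>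
      (\<forall>x<n. \<psi> x \<in> carrier_vec (dA*dB) \<and> (\<Sum>i<dA*dB. cmod (\<psi> x $ i) ^ 2) = 1) \<and>
      \<rho> = ens_avg n (dA*dB) p \<psi>}"
  then obtain n p \<psi> where y: "y = ereal (renyi_cond_ent ((2-\<alpha>)/\<alpha>) dA n
        (swap_sys n dA (ptrace_mid (n*dA) dB 1 (cq_state n (dA*dB) p \<psi>))))"
    and n: "0 < n" and p: "\<forall>x<n. 0 \<le> p x" and ps: "(\<Sum>x<n. p x) = 1"
    and psi: "\<forall>x<n. \<psi> x \<in> carrier_vec (dA*dB) \<and> (\<Sum>i<dA*dB. cmod (\<psi> x $ i) ^ 2) = 1"
    and rho: "\<rho> = ens_avg n (dA*dB) p \<psi>" by blast
  interpret E: ens \<alpha> dA dB n p \<psi> using assms n p ps psi by unfold_locales auto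
  have mem: "ereal (renyi_cmi \<alpha> dA dB n E.om) \<in> {ereal (renyi_cmi \<alpha> dA dB dE \<omega>) | dE \<omega>.
      0 < dE \<and> density (dA*dB*dE) \<omega> \<and> ptrace_mid (dA*dB) dE 1 \<omega> = \<rho>}"
    using n E.L_dens E.L_marg rho by blast
  have "renyi_sq \<alpha> dA dB \<rho> \<le> ereal (1/2) * ereal (renyi_cmi \<alpha> dA dB n E.om)"
    unfolding renyi_sq_def by (rule ereal_mult_left_mono) (use Inf_lower[OF mem] in auto)
  also have "\<dots> = ereal (1/2 * renyi_cmi \<alpha> dA dB n E.om)" by simp
  also have "\<dots> \<le> y" unfolding y E.L_H E.L_cmi
    using final_ineq[OF n _ ps E.tau_pos assms(1,2,3) refl] p by simp
  finally show "renyi_sq \<alpha> dA dB \<rho> \<le> y" .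
qed


end
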